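(* Let $X,Y$ be real Banach spaces and let $f\in C^1(X;Y)$. Assume: (i) $f'(x)\in\mathrm{Isom}(X;Y)$ for every $x\in X$; (ii) $\sup_{\|x\|\le r}\|f'(x)^{-1}\|<+\infty$ for every $r$ with $0<r<+\infty$; (iii) there exists a locally Lipschitz continuous coercive function $k:X\to\mathbb{R}_+$ which admits all right directional derivatives $D^+_v k(x)$ ($x,v\in X$), such that $$\sup\bigl\{D^+_v k(x): v=f'(x)^{-1}u,\ x\in X,\ u\in Y,\ \|u\|=1\bigr\}<+\infty.$$ Then $f$ is a global diffeomorphism of $X$ onto $Y$. When $k\in C^1$, condition (iii) is equivalent to $\sup_{x\in X}\|k'(x)\circ f'(x)^{-1}\|<+\infty$.
   Context: $\mathrm{Isom}(X;Y)$ denotes the set of bounded linear isomorphisms from $X$ onto $Y$. $\mathbb{R}_+=[0,+\infty)$. A function $k:X\to\mathbb{R}_+$ is coercive if it is continuous and $k(x)\to+\infty$ as $\|x\|\to+\infty$. The right directional derivative is $D^+_v k(x):=\lim_{s\to0^+}\frac{k(x+sv)-k(x)}{s}$. *)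

theory Defs
  imports "HOL-Analysis.Analysis"
begin

definition is_isom :: "('a::real_normed_vector \<Rightarrow>\<^sub>L 'b::real_normed_vector) \<Rightarrow> bool" where
  "is_isom T \<longleftrightarrow> (\<exists>S. S o\<^sub>L T = id_blinfun \<and> T o\<^sub>L S = id_blinfun)"

definition inv_isom :: "('a::real_normed_vector \<Rightarrow>\<^sub>L 'b::real_normed_vector) \<Rightarrow> ('b \<Rightarrow>\<^sub>L 'a)" where
  "inv_isom T = (THE S. S o\<^sub>L T = id_blinfun \<and> T o\<^sub>L S = id_blinfun)"

definition has_right_dir_deriv :: "('a::real_normed_vector \<Rightarrow> real) \<Rightarrow> 'a \<Rightarrow> 'a \<Rightarrow> real \<Rightarrow> bool" where
  "has_right_dir_deriv k x v D \<longleftrightarrow>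
     ((\<lambda>s. (k (x + s *\<^sub>R v) - k x) / s) \<longlongrightarrow> D) (at_right 0)"

definition right_dir_deriv :: "('a::real_normed_vector \<Rightarrow> real) \<Rightarrow> 'a \<Rightarrow> 'a \<Rightarrow> real" where
  "right_dir_deriv k x v = Lim (at_right 0) (\<lambda>s. (k (x + s *\<^sub>R v) - k x) / s)"

definition locally_lipschitz :: "('a::metric_space \<Rightarrow> real) \<Rightarrow> bool" where
  "locally_lipschitz k \<longleftrightarrow>
     (\<forall>x. \<exists>e>0. \<exists>L. \<forall>y\<in>ball x e. \<forall>z\<in>ball x e. \<bar>k y - k z\<bar> \<le> L * dist y z)"

definition coercive :: "('a::real_normed_vector \<Rightarrow> real) \<Rightarrow> bool" where
  "coercive k \<longleftrightarrow> continuous_on UNIV k \<and> filterlim k at_top at_infinity"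

definition global_diffeo :: "('a::real_normed_vector \<Rightarrow> 'b::real_normed_vector) \<Rightarrow> bool" where
  "global_diffeo f \<longleftrightarrow>
     (\<exists>f' g g'. bij f \<and> (\<forall>x. g (f x) = x) \<and> (\<forall>y. f (g y) = y)
        \<and> (\<forall>x. (f has_derivative blinfun_apply (f' x)) (at x)) \<and> continuous_on UNIV f'
        \<and> (\<forall>y. (g has_derivative blinfun_apply (g' y)) (at y)) \<and> continuous_on UNIV g')"

end

theory Submission
  imports Defs
begin


lemma isom_inv:
  assumes "is_isom T"
  shows "inv_isom T o\<^sub>L T = id_blinfun \<and> T o\<^sub>L inv_isom T = id_blinfun"
proof -
  obtain S where S: "S o\<^sub>L T = id_blinfun" "T o\<^sub>L S = id_blinfun" using assms unfolding is_isom_def by blast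
  have uniq: "S' = S" if "S' o\<^sub>L T = id_blinfun \<and> T o\<^sub>L S' = id_blinfun" for S'
  proof -
    have "S' = S' o\<^sub>L (T o\<^sub>L S)" using S by (auto intro: blinfun_eqI)
    also have "\<dots> = (S' o\<^sub>L T) o\<^sub>L S" by (auto intro: blinfun_eqI)
    also have "\<dots> = id_blinfun o\<^sub>L S" using that by simp
    also have "\<dots> = S" by (rule blinfun_eqI) simp
    finally show ?thesis .
  qed
  show ?thesis unfolding inv_isom_def
  proof (rule theI[of _ S])
    show "S o\<^sub>L T = id_blinfun \<and> T o\<^sub>L S = id_blinfun" using S by (rule conjI)
  next
    fix S' assume "S' o\<^sub>L T = id_blinfun \<and> T o\<^sub>L S' = id_blinfun" then show "S' = S" by (rule uniq)
  qed
qed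

lemma isom_inv_apply1: "is_isom T \<Longrightarrow> inv_isom T (T x) = x"
  using isom_inv[of T] by (metis blinfun_apply_blinfun_compose blinfun_apply_id_blinfun)
lemma isom_inv_apply2: "is_isom T \<Longrightarrow> T (inv_isom T y) = y"
  using isom_inv[of T] by (metis blinfun_apply_blinfun_compose blinfun_apply_id_blinfun)



locale gd =
  fixes f :: "'a::banach \<Rightarrow> 'b::banach" and f' :: "'a \<Rightarrow> ('a \<Rightarrow>\<^sub>L 'b)"
  assumes deriv: "\<And>x. (f has_derivative blinfun_apply (f' x)) (at x)"
    and cont_deriv: "continuous_on UNIV f'"
    and isom: "\<And>x. is_isom (f' x)"
begin

lemma qli:
  assumes A: "is_isom A" and beta: "norm (inv_isom A) \<le> \<beta>" "0 < \<beta>" and rho: "0 < \<rho>"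
    and close: "\<And>x. x \<in> cball q \<rho> \<Longrightarrow> norm (f' x - A) \<le> 1/(2*\<beta>)"
  shows "\<And>x1 x2. x1 \<in> cball q \<rho> \<Longrightarrow> x2 \<in> cball q \<rho> \<Longrightarrow> norm (x1 - x2) \<le> 2*\<beta> * norm (f x1 - f x2)"
    and "\<And>w. norm (w - f q) < \<rho>/(2*\<beta>) \<Longrightarrow> \<exists>x\<in>ball q \<rho>. f x = w"
proof -
  define B where "B = inv_isom A"
  define \<psi> where "\<psi> x = x - B (f x)" for x
  have dpsi: "(\<psi> has_derivative (\<lambda>h. h - B (f' x h))) (at x within cball q \<rho>)" for x
    unfolding \<psi>_def
    by (intro derivative_eq_intros has_derivative_at_withinI[OF deriv]) (auto intro: has_derivative_at_withinI[OF deriv])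
  have on: "onorm (\<lambda>h. h - B (f' x h)) \<le> 1/2" if "x \<in> cball q \<rho>" for x
  proof (rule onorm_bound)
    fix h
    have "h - B (f' x h) = B ((A - f' x) h)"
      using isom_inv_apply1[OF A, of h] by (simp add: B_def blinfun.diff_left blinfun.diff_right)
    also have "norm \<dots> \<le> norm B * norm ((A - f' x) h)" by (rule norm_blinfun)
    also have "\<dots> \<le> \<beta> * (norm (A - f' x) * norm h)"
      using beta by (intro mult_mono norm_blinfun) (auto simp: B_def)
    also have "\<dots> \<le> \<beta> * ((1/(2*\<beta>)) * norm h)"
      using close[OF that] beta by (intro mult_left_mono mult_right_mono) (auto simp: norm_minus_commute)
    also have "\<dots> = 1/2 * norm h" using beta by simp
    finally show "norm (h - B (f' x h)) \<le> 1/2 * norm h" .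
  qed simp
  have contr: "norm (\<psi> x1 - \<psi> x2) \<le> 1/2 * norm (x1 - x2)" if "x1 \<in> cball q \<rho>" "x2 \<in> cball q \<rho>" for x1 x2
    by (rule differentiable_bound[OF convex_cball dpsi on that])
  have Bn: "norm (B y) \<le> \<beta> * norm y" for y
    using beta norm_blinfun[of B y] by (smt (verit, best) B_def mult_right_mono norm_ge_zero)
  show lip: "norm (x1 - x2) \<le> 2*\<beta> * norm (f x1 - f x2)" if "x1 \<in> cball q \<rho>" "x2 \<in> cball q \<rho>" for x1 x2
  proof -
    have "x1 - x2 = (\<psi> x1 - \<psi> x2) + B (f x1 - f x2)" by (simp add: \<psi>_def blinfun.diff_right)
    then have "norm (x1 - x2) \<le> norm (\<psi> x1 - \<psi> x2) + norm (B (f x1 - f x2))"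
      by (metis norm_triangle_ineq)
    also have "\<dots> \<le> 1/2 * norm (x1 - x2) + \<beta> * norm (f x1 - f x2)"
      using contr[OF that] Bn by (intro add_mono) auto
    finally show ?thesis by simp
  qed
  show "\<exists>x\<in>ball q \<rho>. f x = w" if w: "norm (w - f q) < \<rho>/(2*\<beta>)" for w
  proof -
    define \<Phi> where "\<Phi> x = \<psi> x + B w" for x
    have \<Phi>eq: "\<Phi> x = x - B (f x - w)" for x by (simp add: \<Phi>_def \<psi>_def blinfun.diff_right)
    have wq: "norm (B (f q - w)) < \<rho>/2"
    proof -
      have "norm (B (f q - w)) \<le> \<beta> * norm (w - f q)" using Bn[of "f q - w"] by (simp add: norm_minus_commute)
      also have "\<dots> < \<beta> * (\<rho>/(2*\<beta>))" using w beta by (intro mult_strict_left_mono) auto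
      finally show ?thesis using beta by simp
    qed
    have near: "norm (\<Phi> x - q) < \<rho>/2 + \<rho>/2" if "x \<in> cball q \<rho>" for x
    proof -
      have "\<Phi> x - q = (\<Phi> x - \<Phi> q) - B (f q - w)" by (simp add: \<Phi>eq)
      moreover have "\<Phi> x - \<Phi> q = \<psi> x - \<psi> q" by (simp add: \<Phi>_def)
      ultimately have "norm (\<Phi> x - q) \<le> norm (\<psi> x - \<psi> q) + norm (B (f q - w))"
        by (metis norm_triangle_ineq4)
      moreover have "norm (\<psi> x - \<psi> q) \<le> 1/2 * \<rho>"
        using contr[OF that, of q] that rho by (auto simp: dist_norm norm_minus_commute)
      ultimately show ?thesis using wq by simp
    qed
    have "\<exists>!x\<in>cball q \<rho>. \<Phi> x = x"
    proof (rule Banach_fix[of _ "1/2"])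
      show "complete (cball q \<rho>)" by (simp add: complete_eq_closed)
      show "cball q \<rho> \<noteq> {}" using rho by simp
      show "\<Phi> ` cball q \<rho> \<subseteq> cball q \<rho>"
        using near by (force simp: dist_norm norm_minus_commute)
      show "dist (\<Phi> x) (\<Phi> y) \<le> 1/2 * dist x y" if "x \<in> cball q \<rho>" "y \<in> cball q \<rho>" for x y
        using contr[OF that] by (simp add: \<Phi>_def dist_norm)
    qed auto
    then obtain x where x: "x \<in> cball q \<rho>" "\<Phi> x = x" by blast
    then have "B (f x - w) = 0" by (simp add: \<Phi>eq)
    then have "A (B (f x - w)) = 0" by simp
    then have "f x = w" using isom_inv_apply2[OF A] by (simp add: B_def)
    moreover have "x \<in> ball q \<rho>" using near[OF x(1)] x(2) by (simp add: dist_norm norm_minus_commute)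
    ultimately show ?thesis by blast
  qed
qed

end


lemma inv_isom_diff:
  assumes S: "is_isom S" and T: "is_isom T"
  shows "inv_isom S - inv_isom T = inv_isom S o\<^sub>L (T - S) o\<^sub>L inv_isom T"
proof (rule blinfun_eqI)
  fix y
  show "(inv_isom S - inv_isom T) y = (inv_isom S o\<^sub>L (T - S) o\<^sub>L inv_isom T) y"
    using isom_inv_apply2[OF T, of y] isom_inv_apply1[OF S, of "inv_isom T y"]
    by (simp add: blinfun.diff_left blinfun.diff_right)
qed

lemma inv_isom_near:
  assumes S: "is_isom S" and T: "is_isom T" and small: "norm (S - T) * norm (inv_isom T) \<le> 1/2"
  shows "norm (inv_isom S) \<le> 2 * norm (inv_isom T)"
    and "norm (inv_isom S - inv_isom T) \<le> 2 * norm (inv_isom T)^2 * norm (S - T)"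
proof -
  have eq: "inv_isom S - inv_isom T = inv_isom S o\<^sub>L (T - S) o\<^sub>L inv_isom T" by (rule inv_isom_diff[OF S T])
  have b: "norm (inv_isom S - inv_isom T) \<le> norm (inv_isom S) * (norm (S - T) * norm (inv_isom T))"
  proof -
    have "norm (inv_isom S - inv_isom T) \<le> norm (inv_isom S o\<^sub>L (T - S)) * norm (inv_isom T)"
      unfolding eq by (rule norm_blinfun_compose)
    also have "\<dots> \<le> norm (inv_isom S) * norm (T - S) * norm (inv_isom T)"
      by (intro mult_right_mono norm_blinfun_compose) auto
    finally show ?thesis by (simp add: norm_minus_commute mult.assoc)
  qed
  also have "\<dots> \<le> norm (inv_isom S) * (1/2)" using small by (intro mult_left_mono) auto
  finally have b2: "norm (inv_isom S - inv_isom T) \<le> norm (inv_isom S) / 2" by simp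
  have "norm (inv_isom S) \<le> norm (inv_isom T) + norm (inv_isom S - inv_isom T)"
    by (metis add.commute diff_add_cancel norm_triangle_ineq)
  with b2 show n: "norm (inv_isom S) \<le> 2 * norm (inv_isom T)" by simp
  have "norm (inv_isom S) * (norm (S - T) * norm (inv_isom T)) \<le> (2 * norm (inv_isom T)) * (norm (S - T) * norm (inv_isom T))"
    using n by (intro mult_right_mono) auto
  with b show "norm (inv_isom S - inv_isom T) \<le> 2 * norm (inv_isom T)^2 * norm (S - T)"
    by (simp add: power2_eq_square mult_ac)
qed

lemma continuous_on_inv_isom:
  fixes F :: "'c::metric_space \<Rightarrow> ('a::real_normed_vector \<Rightarrow>\<^sub>L 'b::real_normed_vector)"
  assumes contF: "continuous_on U F" and iso: "\<And>x. x \<in> U \<Longrightarrow> is_isom (F x)"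
  shows "continuous_on U (\<lambda>x. inv_isom (F x))"
  unfolding continuous_on_iff
proof (intro ballI allI impI)
  fix x e assume x: "x \<in> U" and e: "(0::real) < e"
  define n where "n = norm (inv_isom (F x)) + 1"
  have n: "n \<ge> 1" "norm (inv_isom (F x)) \<le> n" by (auto simp: n_def)
  define e' where "e' = min (1/(2*n)) (e/(4*n^2))"
  have e': "e' > 0" using n e by (auto simp: e'_def)
  obtain d where d: "d > 0" "\<And>x'. x' \<in> U \<Longrightarrow> dist x' x < d \<Longrightarrow> dist (F x') (F x) < e'"
    using contF x e' unfolding continuous_on_iff by blast
  show "\<exists>d>0. \<forall>x'\<in>U. dist x' x < d \<longrightarrow> dist (inv_isom (F x')) (inv_isom (F x)) < e"
  proof (intro exI conjI ballI impI)
    fix x' assume x': "x' \<in> U" "dist x' x < d"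
    have ds: "norm (F x' - F x) < e'" using d(2)[OF x'] by (simp add: dist_norm)
    have sm: "norm (F x' - F x) * norm (inv_isom (F x)) \<le> 1/2"
    proof -
      have "norm (F x' - F x) * norm (inv_isom (F x)) \<le> e' * n"
        using ds n e' by (intro mult_mono) auto
      also have "\<dots> \<le> 1/(2*n) * n" using n by (intro mult_right_mono) (auto simp: e'_def)
      finally show ?thesis using n by simp
    qed
    have "norm (inv_isom (F x') - inv_isom (F x)) \<le> 2 * norm (inv_isom (F x))^2 * norm (F x' - F x)"
      by (rule inv_isom_near(2)[OF iso[OF x'(1)] iso[OF x] sm])
    also have "\<dots> \<le> 2 * n^2 * e'"
      using ds n e' by (intro mult_mono power_mono) auto
    also have "\<dots> \<le> 2 * n^2 * (e/(4*n^2))" using n by (intro mult_left_mono) (auto simp: e'_def)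
    also have "\<dots> < e" using n e by (simp add: field_simps)
    finally show "dist (inv_isom (F x')) (inv_isom (F x)) < e" by (simp add: dist_norm)
  qed (rule d(1))
qed

context gd begin

lemma li:
  obtains \<rho> c where "\<rho> > 0" "c > 0"
    "\<And>x1 x2. x1 \<in> cball x0 \<rho> \<Longrightarrow> x2 \<in> cball x0 \<rho> \<Longrightarrow> norm (x1 - x2) \<le> c * norm (f x1 - f x2)"
    "\<And>w. norm (w - f x0) < \<rho>/c \<Longrightarrow> \<exists>x\<in>ball x0 \<rho>. f x = w"
proof -
  define \<beta> where "\<beta> = norm (inv_isom (f' x0)) + 1"
  have \<beta>: "\<beta> > 0" "norm (inv_isom (f' x0)) \<le> \<beta>" unfolding \<beta>_def using norm_ge_zero[of "inv_isom (f' x0)"] by linarith+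
  obtain d where d: "d > 0" "\<And>x. dist x x0 < d \<Longrightarrow> dist (f' x) (f' x0) < 1/(2*\<beta>)"
    using cont_deriv \<beta> unfolding continuous_on_iff by (metis UNIV_I divide_pos_pos mult_pos_pos zero_less_numeral zero_less_one)
  have cl: "norm (f' x - f' x0) \<le> 1/(2*\<beta>)" if "x \<in> cball x0 (d/2)" for x
    using d(2)[of x] that d(1) by (auto simp: dist_norm norm_minus_commute)
  show ?thesis
  proof (rule that[of "d/2" "2*\<beta>"])
    have r: "0 < d/2" using d(1) by simp
    note Q = qli[of "f' x0" \<beta> "d/2" x0, OF isom \<beta>(2) \<beta>(1) r cl]
    show "norm (x1 - x2) \<le> 2 * \<beta> * norm (f x1 - f x2)" if "x1 \<in> cball x0 (d/2)" "x2 \<in> cball x0 (d/2)" for x1 x2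
      using Q(1) that by blast
    show "\<exists>x\<in>ball x0 (d/2). f x = w" if "norm (w - f x0) < d/2/(2*\<beta>)" for w
      using Q(2) that by blast
  qed (use d(1) \<beta> in auto)
qed

end


context gd begin

lemma uniform_li:
  assumes K: "compact K"
  obtains \<rho> c where "\<rho> > 0" "c > 0"
    "\<And>q x1 x2. q \<in> K \<Longrightarrow> x1 \<in> cball q \<rho> \<Longrightarrow> x2 \<in> cball q \<rho> \<Longrightarrow> norm (x1 - x2) \<le> c * norm (f x1 - f x2)"
    "\<And>q w. q \<in> K \<Longrightarrow> norm (w - f q) < \<rho>/c \<Longrightarrow> \<exists>x\<in>ball q \<rho>. f x = w"
proof -
  have ci: "continuous_on UNIV (\<lambda>x. norm (inv_isom (f' x)))"
    by (intro continuous_on_norm continuous_on_inv_isom[OF cont_deriv isom])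
  have "compact ((\<lambda>x. norm (inv_isom (f' x))) ` K)"
    by (rule compact_continuous_image[OF continuous_on_subset[OF ci] K]) auto
  then have "bounded ((\<lambda>x. norm (inv_isom (f' x))) ` K)" by (rule compact_imp_bounded)
  then obtain b where "\<forall>y\<in>(\<lambda>x. norm (inv_isom (f' x))) ` K. norm y \<le> b"
    unfolding bounded_iff by blast
  then have b: "\<And>p. p \<in> K \<Longrightarrow> norm (norm (inv_isom (f' p))) \<le> b" by blast
  define \<beta> where "\<beta> = max b 0 + 1"
  have \<beta>: "\<beta> > 0" "\<And>p. p \<in> K \<Longrightarrow> norm (inv_isom (f' p)) \<le> \<beta>"
    using b by (auto simp: \<beta>_def) (smt (verit) norm_ge_zero)
  have ex: "\<forall>p. \<exists>r. r>0 \<and> (\<forall>x. dist x p < r \<longrightarrow> dist (f' x) (f' p) < 1/(2*\<beta>))"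
  proof
    fix p
    have "0 < 1/(2*\<beta>)" using \<beta>(1) by simp
    then show "\<exists>r. r>0 \<and> (\<forall>x. dist x p < r \<longrightarrow> dist (f' x) (f' p) < 1/(2*\<beta>))"
      using cont_deriv unfolding continuous_on_iff by blast
  qed
  from choice[OF ex] obtain r where r0: "\<forall>p. r p > 0 \<and> (\<forall>x. dist x p < r p \<longrightarrow> dist (f' x) (f' p) < 1/(2*\<beta>))"
    by blast
  have r: "\<And>p. r p > 0" "\<And>p x. dist x p < r p \<Longrightarrow> dist (f' x) (f' p) < 1/(2*\<beta>)"
    using r0 by blast+
  have cov: "K \<subseteq> \<Union>((\<lambda>p. ball p (r p)) ` K)" using r(1) by force
  have op: "\<And>G. G \<in> (\<lambda>p. ball p (r p)) ` K \<Longrightarrow> open G" by auto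
  obtain e where e: "0 < e" "\<And>q. q \<in> K \<Longrightarrow> \<exists>G \<in> (\<lambda>p. ball p (r p)) ` K. ball q e \<subseteq> G"
  proof (rule Heine_Borel_lemma[OF K cov op])
    fix \<epsilon> :: real assume "0 < \<epsilon>" "\<And>x. x \<in> K \<Longrightarrow> \<exists>G\<in>(\<lambda>p. ball p (r p)) ` K. ball x \<epsilon> \<subseteq> G"
    then show thesis by (rule that)
  qed
  have main: "(\<forall>x1 x2. x1 \<in> cball q (e/2) \<longrightarrow> x2 \<in> cball q (e/2) \<longrightarrow> norm (x1 - x2) \<le> 2*\<beta> * norm (f x1 - f x2))
     \<and> (\<forall>w. norm (w - f q) < (e/2)/(2*\<beta>) \<longrightarrow> (\<exists>x\<in>ball q (e/2). f x = w))" if q: "q \<in> K" for q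
  proof -
    obtain p where p: "p \<in> K" "ball q e \<subseteq> ball p (r p)" using e(2)[OF q] by blast
    have cl: "norm (f' x - f' p) \<le> 1/(2*\<beta>)" if "x \<in> cball q (e/2)" for x
    proof -
      have "x \<in> ball q e" using that e(1) by simp
      then have "x \<in> ball p (r p)" using p(2) by blast
      then show ?thesis using r(2)[of x p] by (auto simp: dist_norm norm_minus_commute)
    qed
    have r2: "0 < e/2" using e by simp
    note Q = qli[of "f' p" \<beta> "e/2" q, OF isom \<beta>(2)[OF p(1)] \<beta>(1) r2 cl]
    show ?thesis using Q by blast
  qed
  show ?thesis
  proof (rule that[of "e/2" "2*\<beta>"])
    show "0 < e/2" using e by simp
    show "0 < 2*\<beta>" using \<beta> by simp
    show "norm (x1 - x2) \<le> 2*\<beta> * norm (f x1 - f x2)" if "q \<in> K" "x1 \<in> cball q (e/2)" "x2 \<in> cball q (e/2)" for q x1 x2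
      using main[OF that(1)] that(2,3) by blast
    show "\<exists>x\<in>ball q (e/2). f x = w" if "q \<in> K" "norm (w - f q) < e/2/(2*\<beta>)" for q w
      using main[OF that(1)] that(2) by blast
  qed
qed

end


lemma real_induction:
  fixes T :: real
  assumes T: "0 \<le> T"
    and left: "\<And>t. 0 \<le> t \<Longrightarrow> t \<le> T \<Longrightarrow> (\<And>u. 0 \<le> u \<Longrightarrow> u < t \<Longrightarrow> P u) \<Longrightarrow> P t"
    and right: "\<And>t. 0 \<le> t \<Longrightarrow> t < T \<Longrightarrow> (\<And>u. 0 \<le> u \<Longrightarrow> u \<le> t \<Longrightarrow> P u) \<Longrightarrow>
                   \<exists>\<eta>>0. \<forall>u. t < u \<longrightarrow> u < t + \<eta> \<longrightarrow> u \<le> T \<longrightarrow> P u"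
    and t: "0 \<le> t" "t \<le> T"
  shows "P t"
proof -
  define S where "S = {s. 0 \<le> s \<and> s \<le> T \<and> (\<forall>u. 0 \<le> u \<longrightarrow> u \<le> s \<longrightarrow> P u)}"
  have P0: "P 0" using left[of 0] T by auto
  have S0: "0 \<in> S" using P0 T by (auto simp: S_def)
  have bdd: "bdd_above S" by (auto simp: S_def bdd_above_def)
  define \<sigma> where "\<sigma> = Sup S"
  have \<sigma>0: "0 \<le> \<sigma>" unfolding \<sigma>_def using cSup_upper[OF S0 bdd] .
  have \<sigma>T: "\<sigma> \<le> T" unfolding \<sigma>_def using S0 by (intro cSup_least) (auto simp: S_def)
  have below: "P u" if u0: "0 \<le> u" and u1: "u < \<sigma>" for u
  proof -
    obtain s where "s \<in> S" "u < s" using less_cSupD[of S u] S0 u1[unfolded \<sigma>_def] by blast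
    then show ?thesis using u0 by (auto simp: S_def)
  qed
  have P\<sigma>: "P \<sigma>" using left[OF \<sigma>0 \<sigma>T below] by blast
  have \<sigma>S: "\<sigma> \<in> S" using P\<sigma> below \<sigma>0 \<sigma>T unfolding S_def by (auto simp: order.order_iff_strict)
  have "\<sigma> = T"
  proof (rule ccontr)
    assume "\<sigma> \<noteq> T"
    then have lt: "\<sigma> < T" using \<sigma>T by simp
    have allP: "\<And>u. 0 \<le> u \<Longrightarrow> u \<le> \<sigma> \<Longrightarrow> P u" using \<sigma>S by (auto simp: S_def)
    obtain \<eta> where \<eta>: "\<eta> > 0" "\<And>u. \<sigma> < u \<Longrightarrow> u < \<sigma> + \<eta> \<Longrightarrow> u \<le> T \<Longrightarrow> P u"
      using right[OF \<sigma>0 lt allP] by blast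
    define s where "s = min (\<sigma> + \<eta>/2) T"
    have "s \<in> S" unfolding S_def
    proof (intro CollectI conjI allI impI)
      show "0 \<le> s" using \<sigma>0 \<eta> lt by (simp add: s_def)
      show "s \<le> T" by (simp add: s_def)
      fix u assume "0 \<le> u" "u \<le> s"
      then show "P u"
        using allP[of u] \<eta>(2)[of u] \<eta>(1) by (cases "u \<le> \<sigma>") (auto simp: s_def)
    qed
    then have "s \<le> \<sigma>" unfolding \<sigma>_def using bdd by (rule cSup_upper)
    then show False using \<eta>(1) lt by (simp add: s_def)
  qed
  then show ?thesis using \<sigma>S t by (auto simp: S_def)
qed

lemma left_closed:
  fixes h :: "real \<Rightarrow> 'a::topological_space"
  assumes "0 < t" "continuous_on {0..t} h" "\<And>u. 0 \<le> u \<Longrightarrow> u < t \<Longrightarrow> h u \<in> F" "closed F"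
  shows "h t \<in> F"
proof -
  have "h ` closure {0..<t} \<subseteq> F"
    using assms by (intro image_closure_subset) auto
  then show ?thesis using assms(1) by auto
qed

lemma dini_bound:
  fixes \<phi> :: "real \<Rightarrow> real"
  assumes T: "0 \<le> T" and cont: "continuous_on {0..T} \<phi>"
    and step: "\<And>t \<epsilon>. 0 \<le> t \<Longrightarrow> t < T \<Longrightarrow> \<epsilon> > 0 \<Longrightarrow>
       \<exists>\<eta>>0. \<forall>s. 0 < s \<longrightarrow> s < \<eta> \<longrightarrow> t + s \<le> T \<longrightarrow> \<phi> (t+s) \<le> \<phi> t + (L + \<epsilon>) * s"
    and t: "0 \<le> t" "t \<le> T"
  shows "\<phi> t \<le> \<phi> 0 + L * t"
proof -
  have eps: "\<phi> t \<le> \<phi> 0 + (L + \<epsilon>) * t" if e: "\<epsilon> > 0" for \<epsilon>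
  proof (rule real_induction[OF T _ _ t, where P = "\<lambda>t. \<phi> t \<le> \<phi> 0 + (L + \<epsilon>) * t"])
    fix t assume t: "0 \<le> t" "t \<le> T" and IH: "\<And>u. 0 \<le> u \<Longrightarrow> u < t \<Longrightarrow> \<phi> u \<le> \<phi> 0 + (L + \<epsilon>) * u"
    show "\<phi> t \<le> \<phi> 0 + (L + \<epsilon>) * t"
    proof (cases "t = 0")
      case True then show ?thesis by simp
    next
      case False
      then have tp: "0 < t" using t by simp
      have "(\<lambda>u. \<phi> u - \<phi> 0 - (L + \<epsilon>) * u) t \<in> {..0}"
      proof (rule left_closed[OF tp])
        show "continuous_on {0..t} (\<lambda>u. \<phi> u - \<phi> 0 - (L + \<epsilon>) * u)"
          by (intro continuous_intros continuous_on_subset[OF cont]) (use t in auto)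
      next
        fix u :: real assume "0 \<le> u" "u < t"
        then show "(\<lambda>u. \<phi> u - \<phi> 0 - (L + \<epsilon>) * u) u \<in> {..0}" using IH[of u] by simp
      qed simp
      then show ?thesis by simp
    qed
  next
    fix t assume t: "0 \<le> t" "t < T" and IH: "\<And>u. 0 \<le> u \<Longrightarrow> u \<le> t \<Longrightarrow> \<phi> u \<le> \<phi> 0 + (L + \<epsilon>) * u"
    obtain \<eta> where \<eta>: "\<eta> > 0" "\<And>s. 0 < s \<Longrightarrow> s < \<eta> \<Longrightarrow> t + s \<le> T \<Longrightarrow> \<phi> (t+s) \<le> \<phi> t + (L + \<epsilon>) * s"
      using step[OF t e] by blast
    show "\<exists>\<eta>>0. \<forall>u. t < u \<longrightarrow> u < t + \<eta> \<longrightarrow> u \<le> T \<longrightarrow> \<phi> u \<le> \<phi> 0 + (L + \<epsilon>) * u"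
    proof (intro exI[of _ \<eta>] conjI allI impI)
      fix u assume u: "t < u" "u < t + \<eta>" "u \<le> T"
      have "\<phi> u \<le> \<phi> t + (L + \<epsilon>) * (u - t)" using \<eta>(2)[of "u - t"] u by auto
      also have "\<dots> \<le> \<phi> 0 + (L + \<epsilon>) * t + (L + \<epsilon>) * (u - t)" using IH[of t] t by auto
      finally show "\<phi> u \<le> \<phi> 0 + (L + \<epsilon>) * u" by (simp add: algebra_simps)
    qed (rule \<eta>(1))
  qed
  show ?thesis
  proof (rule field_le_epsilon)
    fix e :: real assume e: "0 < e"
    have "\<phi> t \<le> \<phi> 0 + (L + e/(t+1)) * t" using eps[of "e/(t+1)"] e t by auto
    also have "\<dots> = \<phi> 0 + L * t + e * (t/(t+1))" using t by (simp add: field_simps)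
    also have "\<dots> \<le> \<phi> 0 + L * t + e"
    proof -
      have "t/(t+1) \<le> 1" using t by (simp add: divide_le_eq)
      then have "e * (t/(t+1)) \<le> e" using e by (intro mult_left_le) auto
      then show ?thesis by simp
    qed
    finally show "\<phi> t \<le> \<phi> 0 + L * t + e" .
  qed
qed



context gd begin

definition lift :: "'a \<Rightarrow> 'b \<Rightarrow> real \<Rightarrow> (real \<Rightarrow> 'a) \<Rightarrow> bool" where
  "lift x0 d T \<gamma> \<longleftrightarrow> 0 \<le> T \<and> continuous_on {0..T} \<gamma> \<and> \<gamma> 0 = x0 \<and> (\<forall>t\<in>{0..T}. f (\<gamma> t) = f x0 + t *\<^sub>R d)"

definition locinv :: "'a \<Rightarrow> real \<Rightarrow> real \<Rightarrow> bool" where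
  "locinv x0 \<rho> c \<longleftrightarrow> (\<forall>x1 x2. x1 \<in> cball x0 \<rho> \<longrightarrow> x2 \<in> cball x0 \<rho> \<longrightarrow> norm (x1 - x2) \<le> c * norm (f x1 - f x2))
      \<and> (\<forall>w. norm (w - f x0) < \<rho>/c \<longrightarrow> (\<exists>x\<in>ball x0 \<rho>. f x = w))"

lemma li_lip: "\<exists>\<rho> c. \<rho> > 0 \<and> c > 0 \<and> locinv x0 \<rho> c"
proof -
  obtain \<rho> c where "\<rho> > 0" "c > 0"
    "\<And>x1 x2. x1 \<in> cball x0 \<rho> \<Longrightarrow> x2 \<in> cball x0 \<rho> \<Longrightarrow> norm (x1 - x2) \<le> c * norm (f x1 - f x2)"
    "\<And>w. norm (w - f x0) < \<rho>/c \<Longrightarrow> \<exists>x\<in>ball x0 \<rho>. f x = w"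
    by (rule li[of x0]) blast
  then have "locinv x0 \<rho> c" unfolding locinv_def by (intro conjI allI impI) auto
  then show ?thesis using \<open>\<rho> > 0\<close> \<open>c > 0\<close> by blast
qed

lemma locinv_lip: "locinv x0 \<rho> c \<Longrightarrow> x1 \<in> cball x0 \<rho> \<Longrightarrow> x2 \<in> cball x0 \<rho> \<Longrightarrow> norm (x1 - x2) \<le> c * norm (f x1 - f x2)"
  unfolding locinv_def by simp
lemma locinv_surj: "locinv x0 \<rho> c \<Longrightarrow> norm (w - f x0) < \<rho>/c \<Longrightarrow> \<exists>x\<in>ball x0 \<rho>. f x = w"
  unfolding locinv_def by simp

lemma lift_restrict: "lift x0 d T \<gamma> \<Longrightarrow> 0 \<le> T' \<Longrightarrow> T' \<le> T \<Longrightarrow> lift x0 d T' \<gamma>"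
proof -
  assume L: "lift x0 d T \<gamma>" and T': "0 \<le> T'" "T' \<le> T"
  have "continuous_on {0..T} \<gamma>" using L by (simp add: lift_def)
  then have "continuous_on {0..T'} \<gamma>" by (rule continuous_on_subset) (use T' in auto)
  then show ?thesis using L T' by (auto simp: lift_def)
qed

lemma cont_near:
  assumes "continuous_on {0..T} \<gamma>" "t \<in> {0..T}" "0 < \<rho>"
  obtains \<eta> where "\<eta> > 0" "\<And>u. u \<in> {0..T} \<Longrightarrow> dist u t < \<eta> \<Longrightarrow> dist (\<gamma> u) (\<gamma> t) < \<rho>"
proof -
  have "\<exists>\<eta>>0. \<forall>u\<in>{0..T}. dist u t < \<eta> \<longrightarrow> dist (\<gamma> u) (\<gamma> t) < \<rho>"
    using assms(1)[unfolded continuous_on_iff, rule_format, OF assms(2) assms(3)] .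
  then show ?thesis using that by blast
qed

lemma lift_unique:
  assumes L1: "lift x0 d T \<gamma>1" and L2: "lift x0 d T \<gamma>2" and t: "0 \<le> t" "t \<le> T"
  shows "\<gamma>1 t = \<gamma>2 t"
proof (rule real_induction[where P = "\<lambda>t. \<gamma>1 t = \<gamma>2 t", OF _ _ _ t])
  show "0 \<le> T" using L1 by (simp add: lift_def)
next
  fix t assume t: "0 \<le> t" "t \<le> T" and IH: "\<And>u. 0 \<le> u \<Longrightarrow> u < t \<Longrightarrow> \<gamma>1 u = \<gamma>2 u"
  show "\<gamma>1 t = \<gamma>2 t"
  proof (cases "t = 0")
    case True then show ?thesis using L1 L2 by (simp add: lift_def)
  next
    case False
    then have tp: "0 < t" using t by simp
    have "(\<lambda>u. \<gamma>1 u - \<gamma>2 u) t \<in> {0}"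
    proof (rule left_closed[OF tp])
      have c1: "continuous_on {0..t} \<gamma>1"
        by (rule continuous_on_subset[of "{0..T}"]) (use L1 t in \<open>auto simp: lift_def\<close>)
      have c2: "continuous_on {0..t} \<gamma>2"
        by (rule continuous_on_subset[of "{0..T}"]) (use L2 t in \<open>auto simp: lift_def\<close>)
      show "continuous_on {0..t} (\<lambda>u. \<gamma>1 u - \<gamma>2 u)"
        using c1 c2 by (intro continuous_intros)
    next
      fix u :: real assume "0 \<le> u" "u < t"
      then show "(\<lambda>u. \<gamma>1 u - \<gamma>2 u) u \<in> {0}" using IH[of u] by simp
    qed simp
    then show ?thesis by simp
  qed
next
  fix t assume t: "0 \<le> t" "t < T" and IH: "\<And>u. 0 \<le> u \<Longrightarrow> u \<le> t \<Longrightarrow> \<gamma>1 u = \<gamma>2 u"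
  from li_lip[of "\<gamma>1 t"] obtain \<rho> c where \<rho>: "\<rho> > 0" "c > 0" and LI: "locinv (\<gamma>1 t) \<rho> c"
    by blast
  have lip: "\<And>x1 x2. x1 \<in> cball (\<gamma>1 t) \<rho> \<Longrightarrow> x2 \<in> cball (\<gamma>1 t) \<rho> \<Longrightarrow> norm (x1 - x2) \<le> c * norm (f x1 - f x2)"
    using locinv_lip[OF LI] .
  have tT: "t \<in> {0..T}" using t by simp
  obtain \<eta>1 where \<eta>1: "\<eta>1 > 0" "\<And>u. u \<in> {0..T} \<Longrightarrow> dist u t < \<eta>1 \<Longrightarrow> dist (\<gamma>1 u) (\<gamma>1 t) < \<rho>"
    using cont_near[OF _ tT \<rho>(1), of \<gamma>1] L1 by (auto simp: lift_def)
  obtain \<eta>2 where \<eta>2: "\<eta>2 > 0" "\<And>u. u \<in> {0..T} \<Longrightarrow> dist u t < \<eta>2 \<Longrightarrow> dist (\<gamma>2 u) (\<gamma>2 t) < \<rho>"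
    using cont_near[OF _ tT \<rho>(1), of \<gamma>2] L2 by (auto simp: lift_def)
  show "\<exists>\<eta>>0. \<forall>u. t < u \<longrightarrow> u < t + \<eta> \<longrightarrow> u \<le> T \<longrightarrow> \<gamma>1 u = \<gamma>2 u"
  proof (intro exI[of _ "min \<eta>1 \<eta>2"] conjI allI impI)
    show "0 < min \<eta>1 \<eta>2" using \<eta>1 \<eta>2 by simp
    fix u assume u: "t < u" "u < t + min \<eta>1 \<eta>2" "u \<le> T"
    have uT: "u \<in> {0..T}" using u t by auto
    have du: "dist u t < \<eta>1" "dist u t < \<eta>2" using u by (auto simp: dist_real_def)
    have e: "\<gamma>2 t = \<gamma>1 t" using IH[of t] t by simp
    have a: "\<gamma>1 u \<in> cball (\<gamma>1 t) \<rho>" using \<eta>1(2)[OF uT du(1)] by (simp add: dist_commute)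
    have b: "\<gamma>2 u \<in> cball (\<gamma>1 t) \<rho>" using \<eta>2(2)[OF uT du(2)] e by (simp add: dist_commute)
    have "f (\<gamma>1 u) = f (\<gamma>2 u)" using L1 L2 uT by (simp add: lift_def)
    then have "norm (\<gamma>1 u - \<gamma>2 u) \<le> 0" using lip[OF a b] by simp
    then show "\<gamma>1 u = \<gamma>2 u" by simp
  qed
qed

lemma lift_right_deriv:
  assumes L: "lift x0 d T \<gamma>" and t: "0 \<le> t" "t < T" and e: "\<epsilon> > 0"
  shows "\<exists>\<eta>>0. \<forall>s. 0 < s \<longrightarrow> s < \<eta> \<longrightarrow> t + s \<le> T \<longrightarrow>
           norm (\<gamma> (t+s) - \<gamma> t - s *\<^sub>R inv_isom (f' (\<gamma> t)) d) \<le> \<epsilon> * s"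
proof -
  from li_lip[of "\<gamma> t"] obtain \<rho> c where \<rho>: "\<rho> > 0" "c > 0" and LI: "locinv (\<gamma> t) \<rho> c"
    by blast
  have lip0: "\<And>x1 x2. x1 \<in> cball (\<gamma> t) \<rho> \<Longrightarrow> x2 \<in> cball (\<gamma> t) \<rho> \<Longrightarrow> norm (x1 - x2) \<le> c * norm (f x1 - f x2)"
    using locinv_lip[OF LI] .
  define x where "x = \<gamma> t"
  define A where "A = f' x"
  define B where "B = inv_isom A"
  have lip: "\<And>x1 x2. x1 \<in> cball x \<rho> \<Longrightarrow> x2 \<in> cball x \<rho> \<Longrightarrow> norm (x1 - x2) \<le> c * norm (f x1 - f x2)"
    using lip0 unfolding x_def .
  have tT: "t \<in> {0..T}" using t by simp
  obtain \<eta>1 where \<eta>1: "\<eta>1 > 0" "\<And>u. u \<in> {0..T} \<Longrightarrow> dist u t < \<eta>1 \<Longrightarrow> dist (\<gamma> u) (\<gamma> t) < \<rho>"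
    using cont_near[OF _ tT \<rho>(1), of \<gamma>] L by (auto simp: lift_def)
  have pB: "0 < norm B + 1" using norm_ge_zero[of B] by linarith
  have "0 \<le> c * norm d" using \<rho>(2) by simp
  then have pd: "0 < c * norm d + 1" by linarith
  define e' where "e' = \<epsilon> / ((norm B + 1) * (c * norm d + 1))"
  have e': "e' > 0" using e pB pd by (auto simp: e'_def)
  obtain r where r: "r > 0" "\<And>y. norm (y - x) < r \<Longrightarrow> norm (f y - f x - A (y - x)) \<le> e' * norm (y - x)"
    using deriv[of x] e' unfolding has_derivative_at_alt A_def by blast
  define \<eta> where "\<eta> = min \<eta>1 (r / (c * norm d + 1))"
  have \<eta>: "\<eta> > 0" using \<eta>1 r pd by (auto simp: \<eta>_def)
  show ?thesis
  proof (intro exI[of _ \<eta>] conjI allI impI)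
    fix s assume s: "0 < s" "s < \<eta>" "t + s \<le> T"
    define \<Delta> where "\<Delta> = \<gamma> (t+s) - x"
    have tsT: "t + s \<in> {0..T}" using s t by auto
    have "dist (\<gamma> (t+s)) x < \<rho>" using \<eta>1(2)[OF tsT] s by (auto simp: \<eta>_def dist_real_def x_def)
    then have inb: "\<gamma> (t+s) \<in> cball x \<rho>" by (simp add: dist_commute)
    have fd: "f (\<gamma> (t+s)) - f x = s *\<^sub>R d"
      using L tsT tT by (auto simp: lift_def x_def algebra_simps)
    have nD: "norm \<Delta> \<le> c * (s * norm d)"
      using lip[OF inb, of x] \<rho>(1) fd s(1) by (simp add: \<Delta>_def)
    have "c * (s * norm d) < r"
    proof -
      have "c * (s * norm d) \<le> s * (c * norm d + 1)" using s \<rho> by (simp add: algebra_simps)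
      also have "\<dots> < r / (c * norm d + 1) * (c * norm d + 1)"
        using s pd by (intro mult_strict_right_mono) (auto simp: \<eta>_def)
      also have "\<dots> = r" using pd by simp
      finally show ?thesis .
    qed
    with nD have nDr: "norm ((x + \<Delta>) - x) < r" by simp
    have ga: "\<gamma> (t+s) = x + \<Delta>" by (simp add: \<Delta>_def)
    have key: "\<Delta> - s *\<^sub>R B d = - B (f (x + \<Delta>) - f x - A \<Delta>)"
    proof -
      have "B (A \<Delta>) = \<Delta>" unfolding B_def A_def by (rule isom_inv_apply1[OF isom])
      then show ?thesis using fd ga by (simp add: blinfun.diff_right blinfun.scaleR_right)
    qed
    have "norm (\<Delta> - s *\<^sub>R B d) \<le> norm B * norm (f (x + \<Delta>) - f x - A \<Delta>)"
      unfolding key norm_minus_cancel by (rule norm_blinfun)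
    also have "\<dots> \<le> (norm B + 1) * (e' * norm \<Delta>)"
      using r(2)[OF nDr] by (intro mult_mono) auto
    also have "\<dots> \<le> (norm B + 1) * (e' * (c * (s * norm d)))"
      using nD e' by (intro mult_left_mono) auto
    also have "\<dots> \<le> (norm B + 1) * (e' * (s * (c * norm d + 1)))"
      using e' s \<rho> by (intro mult_left_mono) (auto simp: algebra_simps)
    also have "\<dots> = \<epsilon> * s"
    proof -
      have nz: "(norm B + 1) * (c * norm d + 1) \<noteq> 0" using pB pd by simp
      have "(norm B + 1) * (e' * (s * (c * norm d + 1))) = e' * ((norm B + 1) * (c * norm d + 1)) * s"
        by (simp add: algebra_simps)
      also have "e' * ((norm B + 1) * (c * norm d + 1)) = \<epsilon>" using nz by (simp add: e'_def)
      finally show ?thesis .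
    qed
    finally have fin: "norm (\<Delta> - s *\<^sub>R B d) \<le> \<epsilon> * s" .
    have eqq: "\<gamma> (t+s) - \<gamma> t - s *\<^sub>R inv_isom (f' (\<gamma> t)) d = \<Delta> - s *\<^sub>R B d"
      unfolding \<Delta>_def B_def A_def x_def ..
    show "norm (\<gamma> (t+s) - \<gamma> t - s *\<^sub>R inv_isom (f' (\<gamma> t)) d) \<le> \<epsilon> * s"
      unfolding eqq by (rule fin)
  qed (rule \<eta>)
qed

end


context gd begin

lemma lift_extend:
  assumes L: "lift x0 d T \<gamma>"
  shows "\<exists>\<eta>>0. \<forall>T'. T < T' \<longrightarrow> T' < T + \<eta> \<longrightarrow> (\<exists>\<gamma>'. lift x0 d T' \<gamma>')"
proof -
  define x where "x = \<gamma> T"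
  from li_lip[of x] obtain \<rho> c where \<rho>: "\<rho> > 0" "c > 0" and LI: "locinv x \<rho> c" by blast
  have T0: "0 \<le> T" and contg: "continuous_on {0..T} \<gamma>" and g0: "\<gamma> 0 = x0"
    and gf: "\<And>t. t \<in> {0..T} \<Longrightarrow> f (\<gamma> t) = f x0 + t *\<^sub>R d"
    using L by (auto simp: lift_def)
  have nd: "0 < norm d + 1" using norm_ge_zero[of d] by linarith
  have pd: "0 < c * (norm d + 1)" by (rule mult_pos_pos[OF \<rho>(2) nd])
  define \<eta> where "\<eta> = \<rho> / (c * (norm d + 1))"
  have \<eta>: "\<eta> > 0" using \<rho> pd by (simp add: \<eta>_def)
  define \<phi> where "\<phi> u = (SOME x'. x' \<in> ball x \<rho> \<and> f x' = f x0 + u *\<^sub>R d)" for u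
  have fx: "f x = f x0 + T *\<^sub>R d" using gf[of T] T0 by (simp add: x_def)
  have \<phi>: "\<phi> u \<in> ball x \<rho> \<and> f (\<phi> u) = f x0 + u *\<^sub>R d" if u: "T \<le> u" "u < T + \<eta>" for u
  proof -
    have "norm ((f x0 + u *\<^sub>R d) - f x) = (u - T) * norm d"
      using u by (simp add: fx algebra_simps flip: scaleR_diff_left)
    also have "\<dots> \<le> \<eta> * norm d" using u by (intro mult_right_mono) auto
    also have "\<dots> < \<rho> / c"
    proof -
      have "\<eta> * norm d = (\<rho>/c) * (norm d / (norm d + 1))" using \<rho> by (simp add: \<eta>_def field_simps)
      also have "\<dots> < (\<rho>/c) * 1" using \<rho> nd by (intro mult_strict_left_mono) (auto simp: divide_less_eq)
      finally show ?thesis by simp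
    qed
    finally have "\<exists>x'\<in>ball x \<rho>. f x' = f x0 + u *\<^sub>R d" by (rule locinv_surj[OF LI])
    then show ?thesis unfolding \<phi>_def by (rule someI2_bex) blast
  qed
  have \<phi>T: "\<phi> T = x"
  proof -
    have a: "\<phi> T \<in> cball x \<rho>" "f (\<phi> T) = f x" using \<phi>[of T] \<eta> fx by auto
    have "norm (\<phi> T - x) \<le> c * norm (f (\<phi> T) - f x)" by (rule locinv_lip[OF LI a(1)]) (use \<rho> in simp)
    then show ?thesis using a(2) by simp
  qed
  have \<phi>lip: "dist (\<phi> u) (\<phi> v) \<le> (c * norm d) * dist u v" if "u \<in> {T..<T+\<eta>}" "v \<in> {T..<T+\<eta>}" for u v
  proof -
    have a: "\<phi> u \<in> cball x \<rho>" "\<phi> v \<in> cball x \<rho>" using \<phi>[of u] \<phi>[of v] that by (auto simp: less_imp_le)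
    have "norm (\<phi> u - \<phi> v) \<le> c * norm (f (\<phi> u) - f (\<phi> v))" by (rule locinv_lip[OF LI a])
    also have "f (\<phi> u) - f (\<phi> v) = (u - v) *\<^sub>R d" using \<phi> that by (simp add: algebra_simps)
    finally show ?thesis by (simp add: dist_norm dist_real_def mult_ac)
  qed
  have \<phi>cont: "continuous_on {T..<T+\<eta>} \<phi>"
    by (rule lipschitz_on_continuous_on[OF lipschitz_onI[OF \<phi>lip]]) (use \<rho> in auto)
  show ?thesis
  proof (intro exI[of _ \<eta>] conjI allI impI)
    fix T' assume T': "T < T'" "T' < T + \<eta>"
    define \<gamma>' where "\<gamma>' u = (if u \<le> T then \<gamma> u else \<phi> u)" for u
    have c1: "continuous_on {u \<in> {0..T'}. u \<le> T} \<gamma>"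
      by (rule continuous_on_subset[OF contg]) auto
    have c2: "continuous_on {u \<in> {0..T'}. T \<le> u} \<phi>"
      by (rule continuous_on_subset[OF \<phi>cont]) (use T' in auto)
    have cont: "continuous_on {0..T'} (\<lambda>u. if u \<le> T then \<gamma> u else \<phi> u)"
      by (rule continuous_on_cases_le[OF c1 c2 continuous_on_id]) (simp add: \<phi>T x_def)
    show "\<exists>\<gamma>'. lift x0 d T' \<gamma>'"
    proof (intro exI[of _ \<gamma>'])
      show "lift x0 d T' \<gamma>'" unfolding lift_def
      proof (intro conjI ballI)
        show "0 \<le> T'" using T0 T' by simp
        show "continuous_on {0..T'} \<gamma>'" using cont by (simp add: \<gamma>'_def[abs_def])
        show "\<gamma>' 0 = x0" using T0 g0 by (simp add: \<gamma>'_def)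
        fix t assume t: "t \<in> {0..T'}"
        show "f (\<gamma>' t) = f x0 + t *\<^sub>R d"
        proof (cases "t \<le> T")
          case True then show ?thesis using gf t by (simp add: \<gamma>'_def)
        next
          case False then show ?thesis using \<phi>[of t] t T' by (simp add: \<gamma>'_def)
        qed
      qed
    qed
  qed (rule \<eta>)
qed

end


lemma rdd_eq: "has_right_dir_deriv k x v D \<Longrightarrow> right_dir_deriv k x v = D"
  unfolding has_right_dir_deriv_def right_dir_deriv_def
  by (rule tendsto_Lim[OF trivial_limit_at_right_real])

lemma rdd_zero: "has_right_dir_deriv k x 0 0"
  unfolding has_right_dir_deriv_def by simp

lemma rdd_homog:
  assumes H: "has_right_dir_deriv k x v D" and l: "(l::real) > 0"
  shows "has_right_dir_deriv k x (l *\<^sub>R v) (l * D)"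
proof -
  define F where "F s = (k (x + s *\<^sub>R v) - k x) / s" for s
  have HF: "(F \<longlongrightarrow> D) (at_right 0)" using H unfolding has_right_dir_deriv_def F_def .
  have g: "filterlim (\<lambda>s. l * s) (at_right 0) (at_right (0::real))"
    unfolding filterlim_at
  proof
    show "\<forall>\<^sub>F s in at_right 0. l * s \<in> {0<..} \<and> l * s \<noteq> 0"
      unfolding eventually_at_right_field using l by (intro exI[of _ 1]) auto
    show "((\<lambda>s. l * s) \<longlongrightarrow> 0) (at_right 0)"
      using tendsto_mult_left[OF tendsto_ident_at[of 0 "{0<..}"], of l] by simp
  qed
  have lim: "((\<lambda>s. l * F (l * s)) \<longlongrightarrow> l * D) (at_right 0)"
    by (rule tendsto_mult_left[OF filterlim_compose[OF HF g]])
  have ev: "\<forall>\<^sub>F s in at_right 0. l * F (l * s) = (k (x + s *\<^sub>R (l *\<^sub>R v)) - k x) / s"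
    unfolding eventually_at_right_field
    using l by (intro exI[of _ 1]) (auto simp: F_def mult.commute)
  show ?thesis unfolding has_right_dir_deriv_def
    using lim tendsto_cong[OF ev] by blast
qed

locale gd2 = gd f f' for f :: "'a::banach \<Rightarrow> 'b::banach" and f' +
  fixes k :: "'a \<Rightarrow> real"
  assumes inv_bdd: "\<And>r. 0 < r \<Longrightarrow> bdd_above ((\<lambda>x. norm (inv_isom (f' x))) ` cball 0 r)"
    and k_lip: "locally_lipschitz k"
    and k_coercive: "coercive k"
    and k_dir: "\<And>x v. \<exists>D. has_right_dir_deriv k x v D"
    and k_sup: "bdd_above {right_dir_deriv k x (inv_isom (f' x) u) | x u. norm u = 1}"
begin

definition M where "M = (SOME M. M \<ge> 0 \<and> (\<forall>x d. right_dir_deriv k x (inv_isom (f' x) d) \<le> M * norm d))"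

lemma M: "M \<ge> 0" "\<And>x d. right_dir_deriv k x (inv_isom (f' x) d) \<le> M * norm d"
proof -
  obtain M0 where M0: "\<And>x u. norm u = 1 \<Longrightarrow> right_dir_deriv k x (inv_isom (f' x) u) \<le> M0"
    using k_sup unfolding bdd_above_def by blast
  have "max M0 0 \<ge> 0 \<and> (\<forall>x d. right_dir_deriv k x (inv_isom (f' x) d) \<le> max M0 0 * norm d)"
  proof (intro conjI allI)
    fix x d
    show "right_dir_deriv k x (inv_isom (f' x) d) \<le> max M0 0 * norm d"
    proof (cases "d = 0")
      case True
      then show ?thesis using rdd_eq[OF rdd_zero, of k x] by simp
    next
      case False
      define u where "u = (1 / norm d) *\<^sub>R d"
      have nu: "norm u = 1" using False by (simp add: u_def)
      have du: "d = norm d *\<^sub>R u" using False by (simp add: u_def)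
      obtain D where D: "has_right_dir_deriv k x (inv_isom (f' x) u) D" using k_dir by blast
      have DM: "D \<le> M0" using M0[OF nu, of x] rdd_eq[OF D] by simp
      have "has_right_dir_deriv k x (norm d *\<^sub>R inv_isom (f' x) u) (norm d * D)"
        by (rule rdd_homog[OF D]) (use False in simp)
      moreover have "norm d *\<^sub>R inv_isom (f' x) u = inv_isom (f' x) d"
        by (subst du) (simp add: blinfun.scaleR_right)
      ultimately have H2: "has_right_dir_deriv k x (inv_isom (f' x) d) (norm d * D)" by simp
      have "right_dir_deriv k x (inv_isom (f' x) d) = norm d * D" by (rule rdd_eq[OF H2])
      also have "\<dots> \<le> norm d * max M0 0" using DM by (intro mult_left_mono) auto
      finally show ?thesis by (simp add: mult.commute)
    qed
  qed simp
  then have "M \<ge> 0 \<and> (\<forall>x d. right_dir_deriv k x (inv_isom (f' x) d) \<le> M * norm d)"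
    unfolding M_def by (rule someI)
  then show "M \<ge> 0" "\<And>x d. right_dir_deriv k x (inv_isom (f' x) d) \<le> M * norm d" by auto
qed

lemma k_cont: "continuous_on UNIV k"
  using k_coercive by (simp add: coercive_def)

lemma k_loclip:
  obtains e L where "e > 0" "L > 0" "\<And>y z. y \<in> ball x e \<Longrightarrow> z \<in> ball x e \<Longrightarrow> k y - k z \<le> L * norm (y - z)"
proof -
  obtain e L where e: "e > 0" and L: "\<forall>y\<in>ball x e. \<forall>z\<in>ball x e. \<bar>k y - k z\<bar> \<le> L * dist y z"
    using k_lip unfolding locally_lipschitz_def by blast
  show ?thesis
  proof (rule that[of e "max L 0 + 1"])
    fix y z assume yz: "y \<in> ball x e" "z \<in> ball x e"
    have "\<bar>k y - k z\<bar> \<le> L * dist y z" using L yz by blast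
    then have "k y - k z \<le> L * dist y z" by linarith
    also have "\<dots> \<le> (max L 0 + 1) * dist y z" by (intro mult_right_mono) auto
    finally show "k y - k z \<le> (max L 0 + 1) * norm (y - z)" by (simp add: dist_norm)
  qed (use e in auto)
qed

lemma lift_k_bound:
  assumes L: "lift x0 d T \<gamma>" and t: "0 \<le> t" "t \<le> T"
  shows "k (\<gamma> t) \<le> k x0 + (M * norm d) * t"
proof -
  have T0: "0 \<le> T" and contg: "continuous_on {0..T} \<gamma>" and g0: "\<gamma> 0 = x0"
    using L by (auto simp: lift_def)
  have "(k \<circ> \<gamma>) t \<le> (k \<circ> \<gamma>) 0 + (M * norm d) * t"
  proof (rule dini_bound[OF T0 _ _ t])
    show "continuous_on {0..T} (k \<circ> \<gamma>)"
      by (rule continuous_on_compose[OF contg continuous_on_subset[OF k_cont]]) auto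
  next
    fix t \<epsilon> :: real assume t: "0 \<le> t" "t < T" and e: "\<epsilon> > 0"
    define x where "x = \<gamma> t"
    define v where "v = inv_isom (f' x) d"
    obtain D where D: "has_right_dir_deriv k x v D" using k_dir by blast
    have DM: "D \<le> M * norm d" using M(2)[of x d] rdd_eq[OF D] by (simp add: v_def)
    obtain e L where eL: "e > 0" "L > 0" and kl: "\<And>y z. y \<in> ball x e \<Longrightarrow> z \<in> ball x e \<Longrightarrow> k y - k z \<le> L * norm (y - z)"
      by (rule k_loclip[of x]) blast
    have "\<forall>\<^sub>F s in at_right 0. (k (x + s *\<^sub>R v) - k x) / s < D + \<epsilon>/2"
      using D e unfolding has_right_dir_deriv_def by (intro order_tendstoD(2)) auto
    then obtain b1 where b1: "b1 > 0" "\<And>s. 0 < s \<Longrightarrow> s < b1 \<Longrightarrow> (k (x + s *\<^sub>R v) - k x) / s < D + \<epsilon>/2"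
      unfolding eventually_at_right_field by auto
    have e2: "\<epsilon> / (2*L) > 0" using e eL by simp
    obtain b2 where b2: "b2 > 0" "\<And>s. 0 < s \<Longrightarrow> s < b2 \<Longrightarrow> t + s \<le> T \<Longrightarrow>
        norm (\<gamma> (t+s) - \<gamma> t - s *\<^sub>R inv_isom (f' (\<gamma> t)) d) \<le> \<epsilon> / (2*L) * s"
      using lift_right_deriv[OF L t e2] by blast
    have tT: "t \<in> {0..T}" using t by simp
    obtain b3 where b3: "b3 > 0" "\<And>u. u \<in> {0..T} \<Longrightarrow> dist u t < b3 \<Longrightarrow> dist (\<gamma> u) (\<gamma> t) < e"
      by (rule cont_near[OF contg tT eL(1)]) blast
    define b4 where "b4 = e / (norm v + 1)"
    have nv: "0 < norm v + 1" using norm_ge_zero[of v] by linarith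
    have b4: "b4 > 0" using eL nv by (simp add: b4_def)
    show "\<exists>\<eta>>0. \<forall>s. 0 < s \<longrightarrow> s < \<eta> \<longrightarrow> t + s \<le> T \<longrightarrow>
            (k \<circ> \<gamma>) (t + s) \<le> (k \<circ> \<gamma>) t + (M * norm d + \<epsilon>) * s"
    proof (intro exI[of _ "min (min b1 b2) (min b3 b4)"] conjI allI impI)
      show "0 < min (min b1 b2) (min b3 b4)" using b1 b2 b3 b4 by simp
      fix s assume s: "0 < s" "s < min (min b1 b2) (min b3 b4)" "t + s \<le> T"
      have k1: "k (x + s *\<^sub>R v) - k x < (D + \<epsilon>/2) * s"
        using b1(2)[of s] s by (simp add: divide_less_eq)
      have g1: "\<gamma> (t+s) \<in> ball x e"
        using b3(2)[of "t+s"] s t by (simp add: x_def dist_real_def dist_commute)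
      have "norm (s *\<^sub>R v) < e"
      proof -
        have "norm (s *\<^sub>R v) = s * norm v" using s by simp
        also have "\<dots> \<le> s * (norm v + 1)" using s by simp
        also have "\<dots> < b4 * (norm v + 1)" using s nv by (intro mult_strict_right_mono) auto
        also have "\<dots> = e" using nv by (simp add: b4_def)
        finally show ?thesis .
      qed
      then have g2: "x + s *\<^sub>R v \<in> ball x e" by (simp add: dist_norm)
      have "k (\<gamma> (t+s)) - k (x + s *\<^sub>R v) \<le> L * norm (\<gamma> (t+s) - (x + s *\<^sub>R v))"
        by (rule kl[OF g1 g2])
      also have "\<gamma> (t+s) - (x + s *\<^sub>R v) = \<gamma> (t+s) - \<gamma> t - s *\<^sub>R inv_isom (f' (\<gamma> t)) d"
        by (simp add: x_def v_def)
      also have "L * norm \<dots> \<le> L * (\<epsilon> / (2*L) * s)"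
        using b2(2)[of s] s eL by (intro mult_left_mono) auto
      also have "\<dots> = \<epsilon>/2 * s" using eL by simp
      finally have k2: "k (\<gamma> (t+s)) - k (x + s *\<^sub>R v) \<le> \<epsilon>/2 * s" .
      have "k (\<gamma> (t+s)) \<le> k x + (D + \<epsilon>) * s" using k1 k2 by (simp add: algebra_simps)
      also have "\<dots> \<le> k x + (M * norm d + \<epsilon>) * s" using DM s by (intro add_left_mono mult_right_mono) auto
      finally show "(k \<circ> \<gamma>) (t + s) \<le> (k \<circ> \<gamma>) t + (M * norm d + \<epsilon>) * s" by (simp add: x_def)
    qed
  qed
  then show ?thesis using g0 by simp
qed

end


context gd begin
lemma f_cont: "continuous_on UNIV f"
  by (rule continuous_at_imp_continuous_on) (auto intro: has_derivative_continuous[OF deriv])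
end

context gd2 begin

lemma coer: "\<exists>R>0. \<forall>x. k x \<le> K0 \<longrightarrow> norm x \<le> R"
proof -
  have "filterlim k at_top at_infinity" using k_coercive by (simp add: coercive_def)
  then have "eventually (\<lambda>x. K0 + 1 \<le> k x) at_infinity" unfolding filterlim_at_top by blast
  then obtain b where b: "\<And>x. b \<le> norm x \<Longrightarrow> K0 + 1 \<le> k x" unfolding eventually_at_infinity by blast
  show ?thesis
  proof (intro exI[of _ "max b 1"] conjI allI impI)
    fix x assume "k x \<le> K0"
    then have "\<not> b \<le> norm x" using b[of x] by linarith
    then show "norm x \<le> max b 1" by simp
  qed simp
qed

lemma lift_apriori:
  obtains R C where "R > 0" "C \<ge> 0"
    "\<And>T \<gamma> t. lift x0 d T \<gamma> \<Longrightarrow> T \<le> 1 \<Longrightarrow> 0 \<le> t \<Longrightarrow> t \<le> T \<Longrightarrow> norm (\<gamma> t) \<le> R"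
    "\<And>x. norm x \<le> R \<Longrightarrow> norm (inv_isom (f' x)) \<le> C"
proof -
  obtain R where R: "R > 0" "\<And>x. k x \<le> k x0 + M * norm d \<Longrightarrow> norm x \<le> R"
    using coer[of "k x0 + M * norm d"] by blast
  obtain C0 where C0: "\<And>x. x \<in> cball 0 R \<Longrightarrow> norm (inv_isom (f' x)) \<le> C0"
    using inv_bdd[OF R(1)] unfolding bdd_above_def by blast
  show ?thesis
  proof (rule that[of R "max C0 0"])
    fix T \<gamma> t assume L: "lift x0 d T \<gamma>" and T1: "T \<le> 1" and t: "0 \<le> t" "t \<le> T"
    have "k (\<gamma> t) \<le> k x0 + (M * norm d) * t" by (rule lift_k_bound[OF L t])
    also have "\<dots> \<le> k x0 + (M * norm d) * 1"
      using M(1) t T1 by (intro add_left_mono mult_left_mono) auto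
    finally show "norm (\<gamma> t) \<le> R" using R(2) by simp
  next
    fix x :: 'a assume "norm x \<le> R"
    then show "norm (inv_isom (f' x)) \<le> max C0 0" using C0[of x] by simp
  qed (use R in auto)
qed

lemma lift_lip:
  obtains \<Lambda> where "\<Lambda> \<ge> 0"
    "\<And>T \<gamma> t1 t2. lift x0 d T \<gamma> \<Longrightarrow> T \<le> 1 \<Longrightarrow> t1 \<in> {0..T} \<Longrightarrow> t2 \<in> {0..T} \<Longrightarrow> t1 \<le> t2 \<Longrightarrow>
        norm (\<gamma> t2 - \<gamma> t1) \<le> \<Lambda> * (t2 - t1)"
proof -
  obtain R C where R: "R > 0" "C \<ge> 0"
    and bnd: "\<And>T \<gamma> t. lift x0 d T \<gamma> \<Longrightarrow> T \<le> 1 \<Longrightarrow> 0 \<le> t \<Longrightarrow> t \<le> T \<Longrightarrow> norm (\<gamma> t) \<le> R"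
    and Cb: "\<And>x. norm x \<le> R \<Longrightarrow> norm (inv_isom (f' x)) \<le> C"
    by (rule lift_apriori[of x0 d]) blast
  show ?thesis
  proof (rule that[of "C * norm d"])
    show "0 \<le> C * norm d" using R by simp
    fix T \<gamma> t1 t2 assume L: "lift x0 d T \<gamma>" and T1: "T \<le> 1" and t1: "t1 \<in> {0..T}" and t2: "t2 \<in> {0..T}"
      and t12: "t1 \<le> t2"
    have contg: "continuous_on {0..T} \<gamma>" using L by (simp add: lift_def)
    define \<phi> where "\<phi> s = norm (\<gamma> (t1 + s) - \<gamma> t1)" for s
    have "\<phi> (t2 - t1) \<le> \<phi> 0 + (C * norm d) * (t2 - t1)"
    proof (rule dini_bound)
      show "0 \<le> t2 - t1" using t12 by simp
      show "0 \<le> t2 - t1" "t2 - t1 \<le> t2 - t1" using t12 by simp_all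
      have "continuous_on {0..t2 - t1} (\<lambda>s. \<gamma> (t1 + s))"
        by (rule continuous_on_compose2[OF contg]) (use t1 t2 in \<open>auto intro!: continuous_intros\<close>)
      then show "continuous_on {0..t2 - t1} \<phi>" unfolding \<phi>_def by (intro continuous_intros)
    next
      fix s \<epsilon> :: real assume s: "0 \<le> s" "s < t2 - t1" and e: "\<epsilon> > 0"
      define \<tau> where "\<tau> = t1 + s"
      have \<tau>: "0 \<le> \<tau>" "\<tau> < T" using s t1 t2 by (auto simp: \<tau>_def)
      obtain \<eta> where \<eta>: "\<eta> > 0" "\<And>h. 0 < h \<Longrightarrow> h < \<eta> \<Longrightarrow> \<tau> + h \<le> T \<Longrightarrow>
          norm (\<gamma> (\<tau>+h) - \<gamma> \<tau> - h *\<^sub>R inv_isom (f' (\<gamma> \<tau>)) d) \<le> \<epsilon> * h"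
        using lift_right_deriv[OF L \<tau> e] by blast
      have nv: "norm (inv_isom (f' (\<gamma> \<tau>)) d) \<le> C * norm d"
      proof -
        have "norm (inv_isom (f' (\<gamma> \<tau>)) d) \<le> norm (inv_isom (f' (\<gamma> \<tau>))) * norm d" by (rule norm_blinfun)
        also have "\<dots> \<le> C * norm d" using bnd[OF L T1, of \<tau>] \<tau> by (intro mult_right_mono Cb) auto
        finally show ?thesis .
      qed
      show "\<exists>\<eta>>0. \<forall>h. 0 < h \<longrightarrow> h < \<eta> \<longrightarrow> s + h \<le> t2 - t1 \<longrightarrow> \<phi> (s + h) \<le> \<phi> s + (C * norm d + \<epsilon>) * h"
      proof (intro exI[of _ \<eta>] conjI allI impI)
        fix h assume h: "0 < h" "h < \<eta>" "s + h \<le> t2 - t1"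
        have th: "t1 + (s + h) = \<tau> + h" by (simp add: \<tau>_def)
        have A: "norm (\<gamma> (\<tau>+h) - \<gamma> \<tau> - h *\<^sub>R inv_isom (f' (\<gamma> \<tau>)) d) \<le> \<epsilon> * h"
          using \<eta>(2)[OF h(1,2)] h(3) t2 by (auto simp: \<tau>_def)
        have "norm (\<gamma> (\<tau>+h) - \<gamma> \<tau>) \<le> norm (\<gamma> (\<tau>+h) - \<gamma> \<tau> - h *\<^sub>R inv_isom (f' (\<gamma> \<tau>)) d) + norm (h *\<^sub>R inv_isom (f' (\<gamma> \<tau>)) d)"
          using norm_triangle_ineq[of "\<gamma> (\<tau>+h) - \<gamma> \<tau> - h *\<^sub>R inv_isom (f' (\<gamma> \<tau>)) d" "h *\<^sub>R inv_isom (f' (\<gamma> \<tau>)) d"] by simp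
        also have "\<dots> \<le> \<epsilon> * h + h * (C * norm d)"
          using A nv h by (intro add_mono) (auto intro: mult_left_mono)
        finally have B: "norm (\<gamma> (\<tau>+h) - \<gamma> \<tau>) \<le> (C * norm d + \<epsilon>) * h" by (simp add: algebra_simps)
        have "\<phi> (s + h) = norm ((\<gamma> (\<tau>+h) - \<gamma> \<tau>) + (\<gamma> \<tau> - \<gamma> t1))" unfolding \<phi>_def th by simp
        also have "\<dots> \<le> norm (\<gamma> (\<tau>+h) - \<gamma> \<tau>) + \<phi> s" unfolding \<phi>_def \<tau>_def by (rule norm_triangle_ineq)
        finally show "\<phi> (s + h) \<le> \<phi> s + (C * norm d + \<epsilon>) * h" using B by simp
      qed (rule \<eta>(1))
    qed
    then show "norm (\<gamma> t2 - \<gamma> t1) \<le> C * norm d * (t2 - t1)" by (simp add: \<phi>_def)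
  qed
qed

end


context gd2 begin

lemma lift_exists: "\<exists>\<gamma>. lift x0 d 1 \<gamma>"
proof (rule real_induction[where P = "\<lambda>t. \<exists>\<gamma>. lift x0 d t \<gamma>"])
  fix t :: real assume t: "0 \<le> t" "t \<le> 1" and IH: "\<And>u. 0 \<le> u \<Longrightarrow> u < t \<Longrightarrow> \<exists>\<gamma>. lift x0 d u \<gamma>"
  show "\<exists>\<gamma>. lift x0 d t \<gamma>"
  proof (cases "t = 0")
    case True
    then show ?thesis by (intro exI[of _ "\<lambda>_. x0"]) (auto simp: lift_def)
  next
    case False
    then have tp: "0 < t" using t by simp
    define G where "G u = (SOME \<gamma>. lift x0 d ((u + t)/2) \<gamma>) u" for u
    have Geq: "G u = \<gamma> u" if L: "lift x0 d T' \<gamma>" and T': "T' < t" and u: "0 \<le> u" "u \<le> T'" for T' \<gamma> u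
    proof -
      have ex: "\<exists>\<gamma>. lift x0 d ((u + t)/2) \<gamma>" using IH[of "(u+t)/2"] u T' by auto
      define \<gamma>s where "\<gamma>s = (SOME \<gamma>. lift x0 d ((u + t)/2) \<gamma>)"
      have Ls: "lift x0 d ((u + t)/2) \<gamma>s" unfolding \<gamma>s_def using ex by (rule someI_ex)
      define m where "m = min T' ((u+t)/2)"
      have m: "0 \<le> m" "m \<le> T'" "m \<le> (u+t)/2" "u \<le> m" using u T' unfolding m_def by (simp_all add: min_def)
      have "\<gamma>s u = \<gamma> u"
        by (rule lift_unique[OF lift_restrict[OF Ls m(1) m(3)] lift_restrict[OF L m(1) m(2)] u(1) m(4)])
      then show ?thesis by (simp add: G_def \<gamma>s_def)
    qed
    have GL: "lift x0 d T' G" if T': "0 \<le> T'" "T' < t" for T'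
    proof -
      obtain \<gamma> where L: "lift x0 d T' \<gamma>" using IH[OF T'] by blast
      have eq: "\<And>u. u \<in> {0..T'} \<Longrightarrow> G u = \<gamma> u" using Geq[OF L T'(2)] by auto
      have "continuous_on {0..T'} \<gamma>" using L by (simp add: lift_def)
      then have "continuous_on {0..T'} G"
        by (rule continuous_on_eq) (simp add: eq)
      then show ?thesis using L eq T' by (auto simp: lift_def)
    qed
    obtain \<Lambda> where \<Lambda>: "\<Lambda> \<ge> 0"
      and lip: "\<And>T \<gamma> t1 t2. lift x0 d T \<gamma> \<Longrightarrow> T \<le> 1 \<Longrightarrow> t1 \<in> {0..T} \<Longrightarrow> t2 \<in> {0..T} \<Longrightarrow> t1 \<le> t2 \<Longrightarrow>
        norm (\<gamma> t2 - \<gamma> t1) \<le> \<Lambda> * (t2 - t1)"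
      by (rule lift_lip[of x0 d]) blast
    have Glip: "dist (G u1) (G u2) \<le> \<Lambda> * dist u1 u2" if "u1 \<in> {0..<t}" "u2 \<in> {0..<t}" for u1 u2
    proof (cases "u1 \<le> u2")
      case True
      have L: "lift x0 d u2 G" using GL[of u2] that by auto
      have "norm (G u2 - G u1) \<le> \<Lambda> * (u2 - u1)" using lip[OF L, of u1 u2] True that t by auto
      then show ?thesis using True by (simp add: dist_norm dist_real_def norm_minus_commute)
    next
      case False
      have L: "lift x0 d u1 G" using GL[of u1] that by auto
      have "norm (G u1 - G u2) \<le> \<Lambda> * (u1 - u2)" using lip[OF L, of u2 u1] False that t by auto
      then show ?thesis using False by (simp add: dist_norm dist_real_def)
    qed
    have uc: "uniformly_continuous_on {0..<t} G"
      by (rule lipschitz_on_uniformly_continuous[OF lipschitz_onI[OF Glip \<Lambda>]])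
    obtain g where g: "uniformly_continuous_on (closure {0..<t}) g" "\<And>u. u \<in> {0..<t} \<Longrightarrow> G u = g u"
      by (rule uniformly_continuous_on_extension_on_closure[OF uc]) blast
    have cl: "closure {0..<t} = {0..t}" using tp by simp
    have gc: "continuous_on {0..t} g" using uniformly_continuous_imp_continuous[OF g(1)] cl by simp
    have gf: "f (g u) = f x0 + u *\<^sub>R d" if "0 \<le> u" "u < t" for u
    proof -
      have "lift x0 d u G" using GL[of u] that by simp
      then have "f (G u) = f x0 + u *\<^sub>R d" using that by (auto simp: lift_def)
      then show ?thesis using g(2)[of u] that by simp
    qed
    have "lift x0 d t g" unfolding lift_def
    proof (intro conjI ballI)
      show "0 \<le> t" by (rule t(1))
      show "continuous_on {0..t} g" by (rule gc)
      have "lift x0 d 0 G" using GL[of 0] tp by simp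
      then show "g 0 = x0" using g(2)[of 0] tp by (simp add: lift_def)
      fix u assume u: "u \<in> {0..t}"
      show "f (g u) = f x0 + u *\<^sub>R d"
      proof (cases "u < t")
        case True then show ?thesis using gf u by simp
      next
        case False
        then have ut: "u = t" using u by simp
        have "(\<lambda>u. f (g u) - (f x0 + u *\<^sub>R d)) t \<in> {0}"
        proof (rule left_closed[OF tp])
          show "continuous_on {0..t} (\<lambda>u. f (g u) - (f x0 + u *\<^sub>R d))"
            by (intro continuous_intros continuous_on_compose2[OF f_cont gc]) auto
          show "\<And>u. 0 \<le> u \<Longrightarrow> u < t \<Longrightarrow> (\<lambda>u. f (g u) - (f x0 + u *\<^sub>R d)) u \<in> {0}"
            using gf by simp
        qed simp
        then show ?thesis using ut by simp
      qed
    qed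
    then show ?thesis by blast
  qed
next
  fix t :: real assume t: "0 \<le> t" "t < 1" and IH: "\<And>u. 0 \<le> u \<Longrightarrow> u \<le> t \<Longrightarrow> \<exists>\<gamma>. lift x0 d u \<gamma>"
  obtain \<gamma> where L: "lift x0 d t \<gamma>" using IH[of t] t by blast
  obtain \<eta> where \<eta>: "\<eta> > 0" "\<And>T'. t < T' \<Longrightarrow> T' < t + \<eta> \<Longrightarrow> \<exists>\<gamma>'. lift x0 d T' \<gamma>'"
    using lift_extend[OF L] by blast
  show "\<exists>\<eta>>0. \<forall>u. t < u \<longrightarrow> u < t + \<eta> \<longrightarrow> u \<le> 1 \<longrightarrow> (\<exists>\<gamma>. lift x0 d u \<gamma>)"
    using \<eta> by blast
qed auto

end


context gd2 begin

definition ginv where "ginv z = (SOME \<gamma>. lift 0 (z - f 0) 1 \<gamma>) 1"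

lemma ginv_lift: "lift 0 (z - f 0) 1 (SOME \<gamma>. lift 0 (z - f 0) 1 \<gamma>)"
  using lift_exists[of 0 "z - f 0"] by (rule someI_ex)

lemma ginv_eq: "lift 0 (z - f 0) 1 \<gamma> \<Longrightarrow> ginv z = \<gamma> 1"
  unfolding ginv_def by (rule lift_unique[OF ginv_lift]) auto

lemma f_ginv: "f (ginv z) = z"
  using ginv_lift[of z] unfolding ginv_def lift_def by auto

lemma ginv_local:
  obtains \<delta> c where "\<delta> > 0" "c > 0" "\<And>z. norm (z - z0) < \<delta> \<Longrightarrow> norm (ginv z - ginv z0) \<le> c * norm (z - z0)"
proof -
  define \<gamma>0 where "\<gamma>0 = (SOME \<gamma>. lift 0 (z0 - f 0) 1 \<gamma>)"
  have L0: "lift 0 (z0 - f 0) 1 \<gamma>0" unfolding \<gamma>0_def by (rule ginv_lift)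
  have c0: "continuous_on {0..1} \<gamma>0" and g00: "\<gamma>0 0 = 0" and f0: "\<And>u. u \<in> {0..1} \<Longrightarrow> f (\<gamma>0 u) = f 0 + u *\<^sub>R (z0 - f 0)"
    using L0 by (auto simp: lift_def)
  have K: "compact (\<gamma>0 ` {0..1})" by (rule compact_continuous_image[OF c0 compact_Icc])
  obtain \<rho> c where \<rho>: "\<rho> > 0" "c > 0"
    and lipU: "\<And>q x1 x2. q \<in> \<gamma>0 ` {0..1} \<Longrightarrow> x1 \<in> cball q \<rho> \<Longrightarrow> x2 \<in> cball q \<rho> \<Longrightarrow> norm (x1 - x2) \<le> c * norm (f x1 - f x2)"
    and surjU: "\<And>q w. q \<in> \<gamma>0 ` {0..1} \<Longrightarrow> norm (w - f q) < \<rho>/c \<Longrightarrow> \<exists>x\<in>ball q \<rho>. f x = w"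
    by (rule uniform_li[OF K]) blast
  show ?thesis
  proof (rule that[of "\<rho>/(2*c)" c])
    show "0 < \<rho>/(2*c)" using \<rho> by simp
    show "0 < c" by (rule \<rho>(2))
    fix z assume z: "norm (z - z0) < \<rho>/(2*c)"
    define d where "d = z - f 0"
    define \<gamma> where "\<gamma> u = (SOME x. x \<in> ball (\<gamma>0 u) \<rho> \<and> f x = f 0 + u *\<^sub>R d)" for u
    have zc: "c * norm (z - z0) < \<rho>/2" using z \<rho> by (simp add: field_simps)
    have g: "\<gamma> u \<in> ball (\<gamma>0 u) \<rho> \<and> f (\<gamma> u) = f 0 + u *\<^sub>R d" if u: "u \<in> {0..1}" for u
    proof -
      have q: "\<gamma>0 u \<in> \<gamma>0 ` {0..1}" using u by simp
      have "norm ((f 0 + u *\<^sub>R d) - f (\<gamma>0 u)) = u * norm (z - z0)"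
        using u by (simp add: f0 d_def algebra_simps flip: scaleR_diff_right)
      also have "\<dots> \<le> 1 * norm (z - z0)" using u by (intro mult_right_mono) auto
      also have "\<dots> < \<rho>/c" using z \<rho> by (simp add: field_simps)
      finally have "\<exists>x\<in>ball (\<gamma>0 u) \<rho>. f x = f 0 + u *\<^sub>R d" by (rule surjU[OF q])
      then show ?thesis unfolding \<gamma>_def by (rule someI2_bex) blast
    qed
    have close: "norm (\<gamma> u - \<gamma>0 u) \<le> c * norm (z - z0)" if u: "u \<in> {0..1}" for u
    proof -
      have q: "\<gamma>0 u \<in> \<gamma>0 ` {0..1}" using u by simp
      have "norm (\<gamma> u - \<gamma>0 u) \<le> c * norm (f (\<gamma> u) - f (\<gamma>0 u))"
        by (rule lipU[OF q]) (use g[OF u] \<rho> in auto)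
      also have "f (\<gamma> u) - f (\<gamma>0 u) = u *\<^sub>R (z - z0)"
        using g[OF u] f0[OF u] by (simp add: d_def algebra_simps flip: scaleR_diff_right)
      also have "c * norm (u *\<^sub>R (z - z0)) \<le> c * norm (z - z0)"
      proof -
        have "norm (u *\<^sub>R (z - z0)) = u * norm (z - z0)" using u by simp
        also have "\<dots> \<le> 1 * norm (z - z0)" using u by (intro mult_right_mono) auto
        finally show ?thesis using \<rho> by (intro mult_left_mono) auto
      qed
      finally show ?thesis .
    qed
    have L: "lift 0 d 1 \<gamma>" unfolding lift_def
    proof (intro conjI ballI)
      show "(0::real) \<le> 1" by simp
      show "\<gamma> 0 = 0"
      proof -
        have q: "\<gamma>0 0 \<in> \<gamma>0 ` {0..1}" by simp
        have "norm (\<gamma> 0 - 0) \<le> c * norm (f (\<gamma> 0) - f 0)"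
          using lipU[OF q, of "\<gamma> 0" 0] g[of 0] g00 \<rho> by auto
        then show ?thesis using g[of 0] by simp
      qed
      show "\<And>t. t \<in> {0..1} \<Longrightarrow> f (\<gamma> t) = f 0 + t *\<^sub>R d" using g by blast
      show "continuous_on {0..1} \<gamma>"
        unfolding continuous_on_iff
      proof (intro ballI allI impI)
        fix u0 e :: real assume u0: "u0 \<in> {0..1}" and e: "0 < e"
        have r2: "0 < \<rho>/2" using \<rho> by simp
        obtain \<eta> where \<eta>: "\<eta> > 0" "\<And>u. u \<in> {0..1} \<Longrightarrow> dist u u0 < \<eta> \<Longrightarrow> dist (\<gamma>0 u) (\<gamma>0 u0) < \<rho>/2"
          by (rule cont_near[OF c0 u0 r2]) blast
        have "0 \<le> c * norm d" using \<rho> by simp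
        then have nd: "0 < c * norm d + 1" by linarith
        show "\<exists>\<delta>>0. \<forall>u\<in>{0..1}. dist u u0 < \<delta> \<longrightarrow> dist (\<gamma> u) (\<gamma> u0) < e"
        proof (intro exI[of _ "min \<eta> (e / (c * norm d + 1))"] conjI ballI impI)
          show "0 < min \<eta> (e / (c * norm d + 1))" using \<eta> e nd by simp
          fix u assume u: "u \<in> {0..1}" and du: "dist u u0 < min \<eta> (e / (c * norm d + 1))"
          have q: "\<gamma>0 u0 \<in> \<gamma>0 ` {0..1}" using u0 by simp
          have a: "\<gamma> u \<in> cball (\<gamma>0 u0) \<rho>"
          proof -
            have "dist (\<gamma>0 u0) (\<gamma> u) \<le> dist (\<gamma>0 u0) (\<gamma>0 u) + dist (\<gamma>0 u) (\<gamma> u)" by (rule dist_triangle)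
            also have "\<dots> < \<rho>/2 + \<rho>/2"
            proof (rule add_strict_mono)
              show "dist (\<gamma>0 u0) (\<gamma>0 u) < \<rho>/2" using \<eta>(2)[OF u] du by (auto simp: dist_commute)
              have "dist (\<gamma>0 u) (\<gamma> u) = norm (\<gamma> u - \<gamma>0 u)" by (simp add: dist_norm norm_minus_commute)
              then show "dist (\<gamma>0 u) (\<gamma> u) < \<rho>/2" using close[OF u] zc by simp
            qed
            finally show ?thesis by simp
          qed
          have b: "\<gamma> u0 \<in> cball (\<gamma>0 u0) \<rho>" using g[OF u0] by simp
          have "norm (\<gamma> u - \<gamma> u0) \<le> c * norm (f (\<gamma> u) - f (\<gamma> u0))" by (rule lipU[OF q a b])
          also have "f (\<gamma> u) - f (\<gamma> u0) = (u - u0) *\<^sub>R d" using g[OF u] g[OF u0] by (simp add: algebra_simps)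
          also have "c * norm ((u - u0) *\<^sub>R d) = \<bar>u - u0\<bar> * (c * norm d)" by simp
          also have "\<dots> \<le> \<bar>u - u0\<bar> * (c * norm d + 1)" by (intro mult_left_mono) auto
          also have "\<dots> < e / (c * norm d + 1) * (c * norm d + 1)"
            using du nd by (intro mult_strict_right_mono) (auto simp: dist_real_def)
          also have "\<dots> = e" using nd by simp
          finally show "dist (\<gamma> u) (\<gamma> u0) < e" by (simp add: dist_norm)
        qed
      qed
    qed
    have "ginv z = \<gamma> 1" by (rule ginv_eq) (use L in \<open>simp add: d_def\<close>)
    moreover have "ginv z0 = \<gamma>0 1" by (rule ginv_eq[OF L0])
    ultimately show "norm (ginv z - ginv z0) \<le> c * norm (z - z0)" using close[of 1] by simp
  qed
qed

lemma ginv_cont: "continuous_on UNIV ginv"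
  unfolding continuous_on_iff
proof (intro ballI allI impI)
  fix z0 :: 'b and e :: real assume e: "0 < e"
  obtain \<delta> c where \<delta>: "\<delta> > 0" "c > 0" and bd: "\<And>z. norm (z - z0) < \<delta> \<Longrightarrow> norm (ginv z - ginv z0) \<le> c * norm (z - z0)"
    by (rule ginv_local[of z0]) blast
  show "\<exists>d>0. \<forall>z\<in>UNIV. dist z z0 < d \<longrightarrow> dist (ginv z) (ginv z0) < e"
  proof (intro exI[of _ "min \<delta> (e/c)"] conjI ballI impI)
    show "0 < min \<delta> (e/c)" using \<delta> e by simp
    fix z assume "dist z z0 < min \<delta> (e/c)"
    then have z: "norm (z - z0) < \<delta>" "norm (z - z0) < e/c" by (auto simp: dist_norm)
    have "norm (ginv z - ginv z0) \<le> c * norm (z - z0)" by (rule bd[OF z(1)])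
    also have "\<dots> < c * (e/c)" using z(2) \<delta> by (intro mult_strict_left_mono) auto
    also have "\<dots> = e" using \<delta> by simp
    finally show "dist (ginv z) (ginv z0) < e" by (simp add: dist_norm)
  qed
qed

lemma ginv_f: "ginv (f w) = w"
proof -
  define S where "S = {w. ginv (f w) = w}"
  have gf: "continuous_on UNIV (\<lambda>w. ginv (f w))"
    by (rule continuous_on_compose2[OF ginv_cont f_cont]) auto
  have cS: "closed S" unfolding S_def by (rule closed_Collect_eq[OF gf continuous_on_id])
  have oS: "open S" unfolding open_dist
  proof (intro ballI)
    fix w assume w: "w \<in> S"
    from li_lip[of w] obtain \<rho> c where \<rho>: "\<rho> > 0" "c > 0" and LI: "locinv w \<rho> c" by blast
    obtain \<delta> where \<delta>: "\<delta> > 0" "\<And>w'. dist w' w < \<delta> \<Longrightarrow> dist (ginv (f w')) (ginv (f w)) < \<rho>"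
      using gf \<rho>(1) unfolding continuous_on_iff by blast
    show "\<exists>e>0. \<forall>w'. dist w' w < e \<longrightarrow> w' \<in> S"
    proof (intro exI[of _ "min \<delta> \<rho>"] conjI allI impI)
      show "0 < min \<delta> \<rho>" using \<delta> \<rho> by simp
      fix w' assume dw: "dist w' w < min \<delta> \<rho>"
      have a: "ginv (f w') \<in> cball w \<rho>" using \<delta>(2)[of w'] dw w by (auto simp: S_def dist_commute)
      have b: "w' \<in> cball w \<rho>" using dw by (simp add: dist_commute)
      have "norm (ginv (f w') - w') \<le> c * norm (f (ginv (f w')) - f w')" by (rule locinv_lip[OF LI a b])
      then show "w' \<in> S" by (simp add: f_ginv S_def)
    qed
  qed
  have "0 \<in> S"
  proof -
    have "lift 0 (f 0 - f 0) 1 (\<lambda>_. 0)" by (auto simp: lift_def)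
    then show ?thesis unfolding S_def by (simp add: ginv_eq)
  qed
  then have "S = UNIV" using clopen[of S] cS oS by blast
  then show ?thesis by (auto simp: S_def)
qed

end


lemma rdd_of_deriv:
  fixes h :: "'a::real_normed_vector \<Rightarrow> real"
  assumes hd: "(h has_derivative blinfun_apply H) (at x)"
  shows "right_dir_deriv h x v = H v"
proof -
  have l: "((\<lambda>s::real. x + s *\<^sub>R v) has_derivative (\<lambda>s. s *\<^sub>R v)) (at 0 within {0<..})"
    by (auto intro!: derivative_eq_intros)
  have "((\<lambda>s. h (x + s *\<^sub>R v)) has_derivative (\<lambda>s. H (s *\<^sub>R v))) (at 0 within {0<..})"
    using has_derivative_compose[OF l] hd by simp
  moreover have "(\<lambda>s. H (s *\<^sub>R v)) = (*) (H v)" by (rule ext) (simp add: blinfun.scaleR_right)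
  ultimately have "((\<lambda>s. h (x + s *\<^sub>R v)) has_field_derivative H v) (at 0 within {0<..})"
    by (simp add: has_field_derivative_def)
  then have "((\<lambda>s. (h (x + s *\<^sub>R v) - h x) / s) \<longlongrightarrow> H v) (at_right 0)"
    unfolding has_field_derivative_iff by simp
  then have "has_right_dir_deriv h x v (H v)" unfolding has_right_dir_deriv_def .
  then show ?thesis by (rule rdd_eq)
qed

lemma blinfun_real_bound:
  fixes L :: "'b::real_normed_vector \<Rightarrow>\<^sub>L real"
  assumes "\<And>u. norm u = 1 \<Longrightarrow> L u \<le> M"
  shows "norm L \<le> max M 0"
proof (rule norm_blinfun_bound)
  show "0 \<le> max M 0" by simp
  fix w
  show "norm (L w) \<le> max M 0 * norm w"
  proof (cases "w = 0")
    case True then show ?thesis by simp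
  next
    case False
    define u where "u = (1 / norm w) *\<^sub>R w"
    have nu: "norm u = 1" "norm (- u) = 1" using False by (simp_all add: u_def)
    have wu: "w = norm w *\<^sub>R u" using False by (simp add: u_def)
    have a: "L u \<le> M" "- L u \<le> M" using assms[OF nu(1)] assms[OF nu(2)] by (simp_all add: blinfun.minus_right)
    have "norm (L w) = norm w * \<bar>L u\<bar>" by (subst wu) (simp add: blinfun.scaleR_right abs_mult)
    also have "\<dots> \<le> norm w * max M 0" using a by (intro mult_left_mono) auto
    finally show ?thesis by (simp add: mult.commute)
  qed
qed

theorem theorem3p1:
  fixes f :: "'a::banach \<Rightarrow> 'b::banach"
    and f' :: "'a \<Rightarrow> ('a \<Rightarrow>\<^sub>L 'b)"
    and k :: "'a \<Rightarrow> real"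
  assumes deriv: "\<And>x. (f has_derivative blinfun_apply (f' x)) (at x)"
    and cont_deriv: "continuous_on UNIV f'"
    and isom: "\<And>x. is_isom (f' x)"
    and inv_bdd: "\<And>r. 0 < r \<Longrightarrow> bdd_above ((\<lambda>x. norm (inv_isom (f' x))) ` cball 0 r)"
    and k_nonneg: "\<And>x. k x \<ge> 0"
    and k_lip: "locally_lipschitz k"
    and k_coercive: "coercive k"
    and k_dir: "\<And>x v. \<exists>D. has_right_dir_deriv k x v D"
    and k_sup: "bdd_above {right_dir_deriv k x (inv_isom (f' x) u) | x u. norm u = 1}"
  shows "global_diffeo f
    \<and> (\<forall>(h :: 'a \<Rightarrow> real) h'. (\<forall>x. (h has_derivative blinfun_apply (h' x)) (at x))
          \<and> continuous_on UNIV h' \<longrightarrow>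
        (bdd_above {right_dir_deriv h x (inv_isom (f' x) u) | x u. norm u = 1}
         \<longleftrightarrow> bdd_above (range (\<lambda>x. norm (h' x o\<^sub>L inv_isom (f' x))))))"
proof
  interpret G: gd2 f f' k
    by unfold_locales (fact deriv cont_deriv isom inv_bdd k_lip k_coercive k_dir k_sup)+
  show "global_diffeo f"
    unfolding global_diffeo_def
  proof (intro exI conjI allI)
    show "bij f"
    proof (rule bijI)
      show "inj f" by (rule inj_on_inverseI[of _ G.ginv]) (simp add: G.ginv_f)
      show "surj f" by (metis G.f_ginv surjI)
    qed
    show "\<And>x. G.ginv (f x) = x" by (rule G.ginv_f)
    show "\<And>y. f (G.ginv y) = y" by (rule G.f_ginv)
    show "\<And>x. (f has_derivative blinfun_apply (f' x)) (at x)" by (rule deriv)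
    show "continuous_on UNIV f'" by (rule cont_deriv)
    show "continuous_on UNIV (\<lambda>y. inv_isom (f' (G.ginv y)))"
      by (rule continuous_on_inv_isom[OF continuous_on_compose2[OF cont_deriv G.ginv_cont]]) (auto simp: isom)
    fix y
    show "(G.ginv has_derivative blinfun_apply (inv_isom (f' (G.ginv y)))) (at y)"
    proof (rule has_derivative_inverse_basic[of f "blinfun_apply (f' (G.ginv y))" G.ginv y _ UNIV])
      show "(f has_derivative blinfun_apply (f' (G.ginv y))) (at (G.ginv y))" by (rule deriv)
      show "bounded_linear (blinfun_apply (inv_isom (f' (G.ginv y))))" by (rule blinfun.bounded_linear_right)
      show "blinfun_apply (inv_isom (f' (G.ginv y))) \<circ> blinfun_apply (f' (G.ginv y)) = id"
        by (rule ext) (simp add: isom_inv_apply1[OF isom])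
      show "continuous (at y) G.ginv"
        using G.ginv_cont by (simp add: continuous_on_eq_continuous_at)
      show "\<And>z. z \<in> UNIV \<Longrightarrow> f (G.ginv z) = z" by (rule G.f_ginv)
    qed auto
  qed
next
  show "\<forall>(h :: 'a \<Rightarrow> real) h'. (\<forall>x. (h has_derivative blinfun_apply (h' x)) (at x))
          \<and> continuous_on UNIV h' \<longrightarrow>
        (bdd_above {right_dir_deriv h x (inv_isom (f' x) u) | x u. norm u = 1}
         \<longleftrightarrow> bdd_above (range (\<lambda>x. norm (h' x o\<^sub>L inv_isom (f' x)))))"
  proof (intro allI impI)
    fix h :: "'a \<Rightarrow> real" and h' :: "'a \<Rightarrow> ('a \<Rightarrow>\<^sub>L real)"
    assume H: "(\<forall>x. (h has_derivative blinfun_apply (h' x)) (at x)) \<and> continuous_on UNIV h'"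
    have rd: "right_dir_deriv h x v = h' x v" for x v using H rdd_of_deriv by blast
    have eqA: "{right_dir_deriv h x (inv_isom (f' x) u) | x u. norm u = 1}
        = {(h' x o\<^sub>L inv_isom (f' x)) u | x u. norm u = 1}"
      by (simp add: rd)
    show "bdd_above {right_dir_deriv h x (inv_isom (f' x) u) | x u. norm u = 1}
         \<longleftrightarrow> bdd_above (range (\<lambda>x. norm (h' x o\<^sub>L inv_isom (f' x))))"
      unfolding eqA
    proof
      assume "bdd_above {(h' x o\<^sub>L inv_isom (f' x)) u | x u. norm u = 1}"
      then obtain M where M: "\<And>x u. norm u = 1 \<Longrightarrow> (h' x o\<^sub>L inv_isom (f' x)) u \<le> M"
        unfolding bdd_above_def by blast
      have "norm (h' x o\<^sub>L inv_isom (f' x)) \<le> max M 0" for x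
        by (rule blinfun_real_bound) (rule M)
      then show "bdd_above (range (\<lambda>x. norm (h' x o\<^sub>L inv_isom (f' x))))"
        by (auto simp: bdd_above_def)
    next
      assume "bdd_above (range (\<lambda>x. norm (h' x o\<^sub>L inv_isom (f' x))))"
      then obtain N where N: "\<And>x. norm (h' x o\<^sub>L inv_isom (f' x)) \<le> N"
        unfolding bdd_above_def by blast
      have "(h' x o\<^sub>L inv_isom (f' x)) u \<le> N" if "norm u = 1" for x u
      proof -
        have "(h' x o\<^sub>L inv_isom (f' x)) u \<le> norm ((h' x o\<^sub>L inv_isom (f' x)) u)" by simp
        also have "\<dots> \<le> norm (h' x o\<^sub>L inv_isom (f' x)) * norm u" by (rule norm_blinfun)
        also have "\<dots> \<le> N" using N[of x] that by simp
        finally show ?thesis .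
      qed
      then show "bdd_above {(h' x o\<^sub>L inv_isom (f' x)) u | x u. norm u = 1}"
        unfolding bdd_above_def by blast
    qed
  qed
qed


end
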